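(* Let $(\mathbb{C},P)$ be an extensional, cauchy-complete tripos with full comprehensions and strong power objects. Then $(\mathbb{C},P)$ has effective quotients. Explicitly, for an equivalence relation $\rho$ on $A$, the quotient $A/\rho$ may be taken to be the domain of the comprehension $\lfloor\sigma\rfloor$ of $\sigma=\exists_{\pi_2}\big(\in_A\wedge\forall_{\langle\pi_1,\pi_3\rangle}(\langle\pi_1,\pi_2\rangle^*\rho\leftrightarrow\langle\pi_2,\pi_3\rangle^*\in_A)\big)\in P(\mathbb{P}A)$ (a formula expressing that an element of $\mathbb{P}A$ is the $\rho$-class of some element of $A$).
   Context: A tripos $(\mathbb{C},P)$: $\mathbb{C}$ non-empty with binary products, $P:\mathbb{C}^{op}\to$ Heyting algebras, reindexings $f^*$ Heyting homomorphisms with left adjoints $\exists_f$ (Beck–Chevalley, Frobenius) and right adjoints $\forall_f$ (Beck–Chevalley), and weak power objects ($\mathbb{P}X$, $\in_X\in P(X\times\mathbb{P}X)$ with every $\gamma\in P(X\times Y)$ of the form $(id_X\times\{\gamma\})^*\in_X$). $\delta_A=\exists_{\langle id,id\rangle}\top_A$. Strong power objects: every $A$ has a weak power object $\mathbb{P}A$ with $\delta_{\mathbb{P}A}=\forall_{\langle\pi_2,\pi_3\rangle}(\langle\pi_1,\pi_2\rangle^*\in_A\leftrightarrow\langle\pi_1,\pi_3\rangle^*\in_A)$. Extensional: $f=g$ iff $\top\le\langle f,g\rangle^*\delta$. Cauchy-complete: every $F\in P(Y\times A)$ with $\top_Y\le\exists_{\pi_1}F$ and $\langle\pi_1,\pi_2\rangle^*F\wedge\langle\pi_1,\pi_3\rangle^*F\le\langle\pi_2,\pi_3\rangle^*\delta_A$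 equals $(f\times id_A)^*\delta_A$ for some $f:Y\to A$. Full comprehension of $\alpha\in P(A)$: $\lfloor\alpha\rfloor:X\to A$ with $\lfloor\alpha\rfloor^*\alpha=\top$, universal among $f$ with $f^*\alpha=\top$, and $\lfloor\alpha\rfloor^*\alpha\le\lfloor\alpha\rfloor^*\beta$ iff $\alpha\le\beta$. Equivalence relation on $A$: $\rho\in P(A\times A)$, $\delta_A\le\rho$, symmetric and transitive internally. Effective quotient: $q:A\to A/\rho$ with $\rho=(q\times q)^*\delta_{A/\rho}$, universal among $f:A\to Y$ with $\rho\le(f\times f)^*\delta_Y$. *)

theory Defs
  imports Main
begin

text \<open>Objects of the base category are the elements of type 'o, arrows the elements
of type 'm; the fibre P(X) is the carrier set t_P T X of elements of type 'p, ordered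
by t_le T X, with Heyting operations indexed by the object X.  Reindexing f^* is
t_rx T f, its left adjoint is t_ex T f and its right adjoint t_al T f.\<close>

record ('o, 'm, 'p) tripos_data =
  t_dom :: "'m \<Rightarrow> 'o"
  t_cod :: "'m \<Rightarrow> 'o"
  t_id :: "'o \<Rightarrow> 'm"
  t_comp :: "'m \<Rightarrow> 'm \<Rightarrow> 'm"   (* t_comp T g f = g o f *)
  t_prd :: "'o \<Rightarrow> 'o \<Rightarrow> 'o"
  t_pr1 :: "'o \<Rightarrow> 'o \<Rightarrow> 'm"
  t_pr2 :: "'o \<Rightarrow> 'o \<Rightarrow> 'm"
  t_pair :: "'m \<Rightarrow> 'm \<Rightarrow> 'm"
  t_P :: "'o \<Rightarrow> 'p set"
  t_le :: "'o \<Rightarrow> 'p \<Rightarrow> 'p \<Rightarrow> bool"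
  t_top :: "'o \<Rightarrow> 'p"
  t_bot :: "'o \<Rightarrow> 'p"
  t_meet :: "'o \<Rightarrow> 'p \<Rightarrow> 'p \<Rightarrow> 'p"
  t_join :: "'o \<Rightarrow> 'p \<Rightarrow> 'p \<Rightarrow> 'p"
  t_imp :: "'o \<Rightarrow> 'p \<Rightarrow> 'p \<Rightarrow> 'p"
  t_rx :: "'m \<Rightarrow> 'p \<Rightarrow> 'p"
  t_ex :: "'m \<Rightarrow> 'p \<Rightarrow> 'p"
  t_al :: "'m \<Rightarrow> 'p \<Rightarrow> 'p"

definition hom :: "('o,'m,'p) tripos_data \<Rightarrow> 'm \<Rightarrow> 'o \<Rightarrow> 'o \<Rightarrow> bool" where
  "hom T f X Y \<longleftrightarrow> t_dom T f = X \<and> t_cod T f = Y"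

definition is_category :: "('o,'m,'p) tripos_data \<Rightarrow> bool" where
  "is_category T \<longleftrightarrow>
     (\<forall>X. hom T (t_id T X) X X) \<and>
     (\<forall>f g X Y Z. hom T f X Y \<longrightarrow> hom T g Y Z \<longrightarrow> hom T (t_comp T g f) X Z) \<and>
     (\<forall>f. t_comp T (t_id T (t_cod T f)) f = f \<and> t_comp T f (t_id T (t_dom T f)) = f) \<and>
     (\<forall>f g h. t_cod T f = t_dom T g \<longrightarrow> t_cod T g = t_dom T h \<longrightarrow>
        t_comp T h (t_comp T g f) = t_comp T (t_comp T h g) f)"

definition has_binary_products :: "('o,'m,'p) tripos_data \<Rightarrow> bool" where
  "has_binary_products T \<longleftrightarrow>
     (\<forall>A B. hom T (t_pr1 T A B) (t_prd T A B) A \<and> hom T (t_pr2 T A B) (t_prd T A B) B \<and>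
       (\<forall>Z f g. hom T f Z A \<longrightarrow> hom T g Z B \<longrightarrow>
          hom T (t_pair T f g) Z (t_prd T A B) \<and>
          t_comp T (t_pr1 T A B) (t_pair T f g) = f \<and>
          t_comp T (t_pr2 T A B) (t_pair T f g) = g \<and>
          (\<forall>h. hom T h Z (t_prd T A B) \<longrightarrow> t_comp T (t_pr1 T A B) h = f \<longrightarrow>
               t_comp T (t_pr2 T A B) h = g \<longrightarrow> h = t_pair T f g)))"

definition cross :: "('o,'m,'p) tripos_data \<Rightarrow> 'm \<Rightarrow> 'm \<Rightarrow> 'm" where
  "cross T f g = t_pair T (t_comp T f (t_pr1 T (t_dom T f) (t_dom T g)))
                           (t_comp T g (t_pr2 T (t_dom T f) (t_dom T g)))"

definition prd3 :: "('o,'m,'p) tripos_data \<Rightarrow> 'o \<Rightarrow> 'o \<Rightarrow> 'o \<Rightarrow> 'o" where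
  "prd3 T X Y Z = t_prd T (t_prd T X Y) Z"
definition q1 :: "('o,'m,'p) tripos_data \<Rightarrow> 'o \<Rightarrow> 'o \<Rightarrow> 'o \<Rightarrow> 'm" where
  "q1 T X Y Z = t_comp T (t_pr1 T X Y) (t_pr1 T (t_prd T X Y) Z)"
definition q2 :: "('o,'m,'p) tripos_data \<Rightarrow> 'o \<Rightarrow> 'o \<Rightarrow> 'o \<Rightarrow> 'm" where
  "q2 T X Y Z = t_comp T (t_pr2 T X Y) (t_pr1 T (t_prd T X Y) Z)"
definition q3 :: "('o,'m,'p) tripos_data \<Rightarrow> 'o \<Rightarrow> 'o \<Rightarrow> 'o \<Rightarrow> 'm" where
  "q3 T X Y Z = t_pr2 T (t_prd T X Y) Z"

definition is_heyting :: "('o,'m,'p) tripos_data \<Rightarrow> 'o \<Rightarrow> bool" where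
  "is_heyting T X \<longleftrightarrow>
     (\<forall>a\<in>t_P T X. t_le T X a a) \<and>
     (\<forall>a\<in>t_P T X. \<forall>b\<in>t_P T X. t_le T X a b \<longrightarrow> t_le T X b a \<longrightarrow> a = b) \<and>
     (\<forall>a\<in>t_P T X. \<forall>b\<in>t_P T X. \<forall>c\<in>t_P T X. t_le T X a b \<longrightarrow> t_le T X b c \<longrightarrow> t_le T X a c) \<and>
     t_top T X \<in> t_P T X \<and> t_bot T X \<in> t_P T X \<and>
     (\<forall>a\<in>t_P T X. \<forall>b\<in>t_P T X. t_meet T X a b \<in> t_P T X \<and> t_join T X a b \<in> t_P T X \<and>
        t_imp T X a b \<in> t_P T X) \<and>
     (\<forall>a\<in>t_P T X. t_le T X a (t_top T X) \<and> t_le T X (t_bot T X) a) \<and>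
     (\<forall>a\<in>t_P T X. \<forall>b\<in>t_P T X. \<forall>c\<in>t_P T X.
        (t_le T X c (t_meet T X a b) \<longleftrightarrow> t_le T X c a \<and> t_le T X c b) \<and>
        (t_le T X (t_join T X a b) c \<longleftrightarrow> t_le T X a c \<and> t_le T X b c) \<and>
        (t_le T X c (t_imp T X a b) \<longleftrightarrow> t_le T X (t_meet T X c a) b))"

definition is_pullback :: "('o,'m,'p) tripos_data \<Rightarrow> 'm \<Rightarrow> 'm \<Rightarrow> 'm \<Rightarrow> 'm \<Rightarrow> bool" where
  "is_pullback T f g p q \<longleftrightarrow>
     t_cod T f = t_cod T g \<and> t_cod T p = t_dom T f \<and> t_cod T q = t_dom T g \<and>
     t_dom T p = t_dom T q \<and> t_comp T f p = t_comp T g q \<and>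
     (\<forall>u v. t_cod T u = t_dom T f \<longrightarrow> t_cod T v = t_dom T g \<longrightarrow> t_dom T u = t_dom T v \<longrightarrow>
        t_comp T f u = t_comp T g v \<longrightarrow>
        (\<exists>!w. hom T w (t_dom T u) (t_dom T p) \<and> t_comp T p w = u \<and> t_comp T q w = v))"

text \<open>Weak power object (PA, m) of A, with m = \<in>_A \<in> P(A \<times> PA).\<close>
definition weak_power :: "('o,'m,'p) tripos_data \<Rightarrow> 'o \<Rightarrow> 'o \<Rightarrow> 'p \<Rightarrow> bool" where
  "weak_power T A PA m \<longleftrightarrow> m \<in> t_P T (t_prd T A PA) \<and>
     (\<forall>Y. \<forall>\<gamma>\<in>t_P T (t_prd T A Y). \<exists>c. hom T c Y PA \<and> \<gamma> = t_rx T (cross T (t_id T A) c) m)"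

definition is_tripos :: "('o,'m,'p) tripos_data \<Rightarrow> bool" where
  "is_tripos T \<longleftrightarrow> is_category T \<and> has_binary_products T \<and> (\<forall>X. is_heyting T X) \<and>
     \<comment> \<open>P is a functor into Heyting algebras; reindexings are Heyting homomorphisms\<close>
     (\<forall>X. \<forall>a\<in>t_P T X. t_rx T (t_id T X) a = a) \<and>
     (\<forall>f g. t_cod T f = t_dom T g \<longrightarrow> (\<forall>a\<in>t_P T (t_cod T g).
        t_rx T (t_comp T g f) a = t_rx T f (t_rx T g a))) \<and>
     (\<forall>f X Y. hom T f X Y \<longrightarrow>
        (\<forall>a\<in>t_P T Y. t_rx T f a \<in> t_P T X) \<and>
        t_rx T f (t_top T Y) = t_top T X \<and> t_rx T f (t_bot T Y) = t_bot T X \<and>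
        (\<forall>a\<in>t_P T Y. \<forall>b\<in>t_P T Y.
           t_rx T f (t_meet T Y a b) = t_meet T X (t_rx T f a) (t_rx T f b) \<and>
           t_rx T f (t_join T Y a b) = t_join T X (t_rx T f a) (t_rx T f b) \<and>
           t_rx T f (t_imp T Y a b) = t_imp T X (t_rx T f a) (t_rx T f b))) \<and>
     \<comment> \<open>left and right adjoints, Frobenius\<close>
     (\<forall>f X Y. hom T f X Y \<longrightarrow>
        (\<forall>a\<in>t_P T X. t_ex T f a \<in> t_P T Y \<and> t_al T f a \<in> t_P T Y) \<and>
        (\<forall>a\<in>t_P T X. \<forall>b\<in>t_P T Y.
           (t_le T Y (t_ex T f a) b \<longleftrightarrow> t_le T X a (t_rx T f b)) \<and>
           (t_le T X (t_rx T f b) a \<longleftrightarrow> t_le T Y b (t_al T f a)) \<and>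
           t_ex T f (t_meet T X a (t_rx T f b)) = t_meet T Y (t_ex T f a) b)) \<and>
     \<comment> \<open>Beck--Chevalley for all pullback squares  f o p = g o q\<close>
     (\<forall>f g p q. is_pullback T f g p q \<longrightarrow> (\<forall>a\<in>t_P T (t_dom T f).
        t_rx T g (t_ex T f a) = t_ex T q (t_rx T p a) \<and>
        t_rx T g (t_al T f a) = t_al T q (t_rx T p a))) \<and>
     \<comment> \<open>weak power objects\<close>
     (\<forall>A. \<exists>PA m. weak_power T A PA m)"

definition delta :: "('o,'m,'p) tripos_data \<Rightarrow> 'o \<Rightarrow> 'p" where
  "delta T A = t_ex T (t_pair T (t_id T A) (t_id T A)) (t_top T A)"

definition iff :: "('o,'m,'p) tripos_data \<Rightarrow> 'o \<Rightarrow> 'p \<Rightarrow> 'p \<Rightarrow> 'p" where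
  "iff T X a b = t_meet T X (t_imp T X a b) (t_imp T X b a)"

definition strong_power :: "('o,'m,'p) tripos_data \<Rightarrow> 'o \<Rightarrow> 'o \<Rightarrow> 'p \<Rightarrow> bool" where
  "strong_power T A PA m \<longleftrightarrow> weak_power T A PA m \<and>
     delta T PA = t_al T (t_pair T (q2 T A PA PA) (q3 T A PA PA))
        (iff T (prd3 T A PA PA)
           (t_rx T (t_pair T (q1 T A PA PA) (q2 T A PA PA)) m)
           (t_rx T (t_pair T (q1 T A PA PA) (q3 T A PA PA)) m))"

definition has_strong_power_objects :: "('o,'m,'p) tripos_data \<Rightarrow> bool" where
  "has_strong_power_objects T \<longleftrightarrow> (\<forall>A. \<exists>PA m. strong_power T A PA m)"

definition extensional :: "('o,'m,'p) tripos_data \<Rightarrow> bool" where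
  "extensional T \<longleftrightarrow> (\<forall>f g Y A. hom T f Y A \<longrightarrow> hom T g Y A \<longrightarrow>
     (f = g \<longleftrightarrow> t_le T Y (t_top T Y) (t_rx T (t_pair T f g) (delta T A))))"

definition cauchy_complete :: "('o,'m,'p) tripos_data \<Rightarrow> bool" where
  "cauchy_complete T \<longleftrightarrow> (\<forall>Y A. \<forall>F\<in>t_P T (t_prd T Y A).
     t_le T Y (t_top T Y) (t_ex T (t_pr1 T Y A) F) \<and>
     t_le T (prd3 T Y A A)
       (t_meet T (prd3 T Y A A) (t_rx T (t_pair T (q1 T Y A A) (q2 T Y A A)) F)
                                (t_rx T (t_pair T (q1 T Y A A) (q3 T Y A A)) F))
       (t_rx T (t_pair T (q2 T Y A A) (q3 T Y A A)) (delta T A))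
     \<longrightarrow> (\<exists>f. hom T f Y A \<and> F = t_rx T (cross T f (t_id T A)) (delta T A)))"

definition full_comprehension :: "('o,'m,'p) tripos_data \<Rightarrow> 'o \<Rightarrow> 'p \<Rightarrow> 'm \<Rightarrow> bool" where
  "full_comprehension T A \<alpha> c \<longleftrightarrow> t_cod T c = A \<and>
     t_rx T c \<alpha> = t_top T (t_dom T c) \<and>
     (\<forall>f. t_cod T f = A \<longrightarrow> t_rx T f \<alpha> = t_top T (t_dom T f) \<longrightarrow>
        (\<exists>!h. hom T h (t_dom T f) (t_dom T c) \<and> t_comp T c h = f)) \<and>
     (\<forall>\<beta>\<in>t_P T A. t_le T (t_dom T c) (t_rx T c \<alpha>) (t_rx T c \<beta>) \<longleftrightarrow> t_le T A \<alpha> \<beta>)"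

definition has_full_comprehensions :: "('o,'m,'p) tripos_data \<Rightarrow> bool" where
  "has_full_comprehensions T \<longleftrightarrow> (\<forall>A. \<forall>\<alpha>\<in>t_P T A. \<exists>c. full_comprehension T A \<alpha> c)"

definition equiv_rel :: "('o,'m,'p) tripos_data \<Rightarrow> 'o \<Rightarrow> 'p \<Rightarrow> bool" where
  "equiv_rel T A \<rho> \<longleftrightarrow> \<rho> \<in> t_P T (t_prd T A A) \<and>
     t_le T (t_prd T A A) (delta T A) \<rho> \<and>
     t_le T (t_prd T A A) \<rho> (t_rx T (t_pair T (t_pr2 T A A) (t_pr1 T A A)) \<rho>) \<and>
     t_le T (prd3 T A A A)
       (t_meet T (prd3 T A A A) (t_rx T (t_pair T (q1 T A A A) (q2 T A A A)) \<rho>)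
                                (t_rx T (t_pair T (q2 T A A A) (q3 T A A A)) \<rho>))
       (t_rx T (t_pair T (q1 T A A A) (q3 T A A A)) \<rho>)"

definition effective_quotient :: "('o,'m,'p) tripos_data \<Rightarrow> 'o \<Rightarrow> 'p \<Rightarrow> 'm \<Rightarrow> bool" where
  "effective_quotient T A \<rho> q \<longleftrightarrow> t_dom T q = A \<and>
     \<rho> = t_rx T (cross T q q) (delta T (t_cod T q)) \<and>
     (\<forall>f. t_dom T f = A \<longrightarrow> t_le T (t_prd T A A) \<rho> (t_rx T (cross T f f) (delta T (t_cod T f))) \<longrightarrow>
        (\<exists>!h. hom T h (t_cod T q) (t_cod T f) \<and> t_comp T h q = f))"

definition has_effective_quotients :: "('o,'m,'p) tripos_data \<Rightarrow> bool" where
  "has_effective_quotients T \<longleftrightarrow> (\<forall>A \<rho>. equiv_rel T A \<rho> \<longrightarrow> (\<exists>q. effective_quotient T A \<rho> q))"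

definition class_formula :: "('o,'m,'p) tripos_data \<Rightarrow> 'o \<Rightarrow> 'o \<Rightarrow> 'p \<Rightarrow> 'p \<Rightarrow> 'p" where
  "class_formula T A PA m \<rho> =
     t_ex T (t_pr2 T A PA)
       (t_meet T (t_prd T A PA) m
          (t_al T (t_pair T (q1 T A A PA) (q3 T A A PA))
             (iff T (prd3 T A A PA)
                (t_rx T (t_pair T (q1 T A A PA) (q2 T A A PA)) \<rho>)
                (t_rx T (t_pair T (q2 T A A PA) (q3 T A A PA)) m))))"

end

theory Submission
  imports Defs
begin

locale trip =
  fixes T :: "('o,'m,'p) tripos_data"
  assumes trip: "is_tripos T" and ext: "extensional T" and cc: "cauchy_complete T"
    and fc: "has_full_comprehensions T"
begin

abbreviation "Dom \<equiv> t_dom T"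
abbreviation "Cod \<equiv> t_cod T"
abbreviation "Idm \<equiv> t_id T"
abbreviation "cmp \<equiv> t_comp T"
abbreviation "prd \<equiv> t_prd T"
abbreviation "p1 \<equiv> t_pr1 T"
abbreviation "p2 \<equiv> t_pr2 T"
abbreviation "pr \<equiv> t_pair T"
abbreviation "PP \<equiv> t_P T"
abbreviation "Le \<equiv> t_le T"
abbreviation "Top \<equiv> t_top T"
abbreviation "Meet \<equiv> t_meet T"
abbreviation "Imp \<equiv> t_imp T"
abbreviation "rx \<equiv> t_rx T"
abbreviation "ex \<equiv> t_ex T"
abbreviation "al \<equiv> t_al T"

lemma cat: "is_category T" using trip unfolding is_tripos_def by blast
lemma prods: "has_binary_products T" using trip unfolding is_tripos_def by blast

lemma Id_dom[simp]: "Dom (Idm X) = X" and Id_cod[simp]: "Cod (Idm X) = X"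
  using cat unfolding is_category_def hom_def by auto

lemma cmp_dom[simp]: "Cod f = Dom g \<Longrightarrow> Dom (cmp g f) = Dom f"
  and cmp_cod[simp]: "Cod f = Dom g \<Longrightarrow> Cod (cmp g f) = Cod g"
  using cat unfolding is_category_def hom_def by metis+

lemma cmp_Id_left[simp]: "Cod f = X \<Longrightarrow> cmp (Idm X) f = f"
  and cmp_Id_right[simp]: "Dom f = X \<Longrightarrow> cmp f (Idm X) = f"
  using cat unfolding is_category_def by auto

lemma cmp_assoc[simp]: "Cod f = Dom g \<Longrightarrow> Cod g = Dom h \<Longrightarrow> cmp (cmp h g) f = cmp h (cmp g f)"
  using cat unfolding is_category_def by metis

lemma p1_dom[simp]: "Dom (p1 A B) = prd A B" and p1_cod[simp]: "Cod (p1 A B) = A"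
  and p2_dom[simp]: "Dom (p2 A B) = prd A B" and p2_cod[simp]: "Cod (p2 A B) = B"
  using prods unfolding has_binary_products_def hom_def by auto

lemma pr_dom[simp]: "Dom f = Dom g \<Longrightarrow> Dom (pr f g) = Dom f"
  and pr_cod[simp]: "Dom f = Dom g \<Longrightarrow> Cod (pr f g) = prd (Cod f) (Cod g)"
  using prods unfolding has_binary_products_def hom_def by metis+

lemma p1_pr[simp]: "Dom f = Dom g \<Longrightarrow> Cod f = A \<Longrightarrow> Cod g = B \<Longrightarrow> cmp (p1 A B) (pr f g) = f"
  and p2_pr[simp]: "Dom f = Dom g \<Longrightarrow> Cod f = A \<Longrightarrow> Cod g = B \<Longrightarrow> cmp (p2 A B) (pr f g) = g"
  using prods unfolding has_binary_products_def hom_def by metis+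

lemma pr_unique: "Dom h = Z \<Longrightarrow> Cod h = prd A B \<Longrightarrow> h = pr (cmp (p1 A B) h) (cmp (p2 A B) h)"
proof -
  assume h: "Dom h = Z" "Cod h = prd A B"
  let ?f = "cmp (p1 A B) h" and ?g = "cmp (p2 A B) h"
  have "hom T ?f Z A" "hom T ?g Z B" using h by (auto simp: hom_def)
  then show ?thesis using prods h unfolding has_binary_products_def hom_def by metis
qed

lemma pr_eta[simp]: "Cod h = prd A B \<Longrightarrow> pr (cmp (p1 A B) h) (cmp (p2 A B) h) = h"
  using pr_unique by metis

lemma pr_p1p2[simp]: "pr (p1 A B) (p2 A B) = Idm (prd A B)"
  using pr_eta[of "Idm (prd A B)" A B] by simp

lemma pr_cmp[simp]: "Dom f = Dom g \<Longrightarrow> Cod h = Dom f \<Longrightarrow> cmp (pr f g) h = pr (cmp f h) (cmp g h)"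
proof -
  assume a: "Dom f = Dom g" "Cod h = Dom f"
  have "cmp (pr f g) h = pr (cmp (p1 (Cod f) (Cod g)) (cmp (pr f g) h)) (cmp (p2 (Cod f) (Cod g)) (cmp (pr f g) h))"
    by (rule pr_unique[where Z="Dom h"]) (use a in auto)
  also have "\<dots> = pr (cmp f h) (cmp g h)"
    using a by (simp flip: cmp_assoc)
  finally show ?thesis .
qed

lemma pr_inj: "Dom f = Dom g \<Longrightarrow> Dom f' = Dom g' \<Longrightarrow> Cod f = Cod f' \<Longrightarrow> Cod g = Cod g' \<Longrightarrow>
   pr f g = pr f' g' \<Longrightarrow> f = f' \<and> g = g'"
  by (metis p1_pr p2_pr)


lemma tp_hey: "\<forall>X. is_heyting T X"
  using trip unfolding is_tripos_def by (elim conjE) assumption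
lemma tp_rxid: "\<forall>X. \<forall>a\<in>PP X. rx (Idm X) a = a"
  using trip unfolding is_tripos_def by (elim conjE) assumption
lemma tp_rxcmp: "\<forall>f g. Cod f = Dom g \<longrightarrow> (\<forall>a\<in>PP (Cod g). rx (cmp g f) a = rx f (rx g a))"
  using trip unfolding is_tripos_def by (elim conjE) assumption
lemma tp_rx: "\<forall>f X Y. hom T f X Y \<longrightarrow>
       (\<forall>a\<in>PP Y. rx f a \<in> PP X) \<and> rx f (Top Y) = Top X \<and> rx f (t_bot T Y) = t_bot T X \<and>
       (\<forall>a\<in>PP Y. \<forall>b\<in>PP Y. rx f (Meet Y a b) = Meet X (rx f a) (rx f b) \<and>
              rx f (t_join T Y a b) = t_join T X (rx f a) (rx f b) \<and>
              rx f (Imp Y a b) = Imp X (rx f a) (rx f b))"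
  using trip unfolding is_tripos_def by (elim conjE) assumption
lemma tp_adj: "\<forall>f X Y. hom T f X Y \<longrightarrow>
       (\<forall>a\<in>PP X. ex f a \<in> PP Y \<and> al f a \<in> PP Y) \<and>
       (\<forall>a\<in>PP X. \<forall>b\<in>PP Y. Le Y (ex f a) b = Le X a (rx f b) \<and>
              Le X (rx f b) a = Le Y b (al f a) \<and> ex f (Meet X a (rx f b)) = Meet Y (ex f a) b)"
  using trip unfolding is_tripos_def by (elim conjE) assumption
lemma tp_bc: "\<forall>f g p q. is_pullback T f g p q \<longrightarrow>
       (\<forall>a\<in>PP (Dom f). rx g (ex f a) = ex q (rx p a) \<and> rx g (al f a) = al q (rx p a))"
  using trip unfolding is_tripos_def by (elim conjE) assumption

lemma hey: "is_heyting T X" using tp_hey by blast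

lemma H1: "\<forall>a\<in>PP X. Le X a a"
  using hey[of X] unfolding is_heyting_def by (elim conjE) assumption
lemma H2: "\<forall>a\<in>PP X. \<forall>b\<in>PP X. Le X a b \<longrightarrow> Le X b a \<longrightarrow> a = b"
  using hey[of X] unfolding is_heyting_def by (elim conjE) assumption
lemma H3: "\<forall>a\<in>PP X. \<forall>b\<in>PP X. \<forall>c\<in>PP X. Le X a b \<longrightarrow> Le X b c \<longrightarrow> Le X a c"
  using hey[of X] unfolding is_heyting_def by (elim conjE) assumption
lemma H4: "Top X \<in> PP X"
  using hey[of X] unfolding is_heyting_def by (elim conjE) assumption
lemma H5: "\<forall>a\<in>PP X. \<forall>b\<in>PP X. Meet X a b \<in> PP X \<and> t_join T X a b \<in> PP X \<and> Imp X a b \<in> PP X"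
  using hey[of X] unfolding is_heyting_def by (elim conjE) assumption
lemma H6: "\<forall>a\<in>PP X. Le X a (Top X) \<and> Le X (t_bot T X) a"
  using hey[of X] unfolding is_heyting_def by (elim conjE) assumption
lemma H7: "\<forall>a\<in>PP X. \<forall>b\<in>PP X. \<forall>c\<in>PP X.
        (Le X c (Meet X a b) \<longleftrightarrow> Le X c a \<and> Le X c b) \<and>
        (Le X (t_join T X a b) c \<longleftrightarrow> Le X a c \<and> Le X b c) \<and>
        (Le X c (Imp X a b) \<longleftrightarrow> Le X (Meet X c a) b)"
  using hey[of X] unfolding is_heyting_def by (elim conjE) assumption

lemma le_refl[simp]: "a \<in> PP X \<Longrightarrow> Le X a a" using H1 by blast
lemma le_antisym: "a \<in> PP X \<Longrightarrow> b \<in> PP X \<Longrightarrow> Le X a b \<Longrightarrow> Le X b a \<Longrightarrow> a = b"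
  using H2 by blast
lemma le_trans: "Le X a b \<Longrightarrow> Le X b c \<Longrightarrow> a \<in> PP X \<Longrightarrow> b \<in> PP X \<Longrightarrow> c \<in> PP X \<Longrightarrow> Le X a c"
  using H3 by blast
lemma Top_P[simp]: "Top X \<in> PP X" using H4 by blast
lemma Meet_P[simp]: "a \<in> PP X \<Longrightarrow> b \<in> PP X \<Longrightarrow> Meet X a b \<in> PP X"
  and Imp_P[simp]: "a \<in> PP X \<Longrightarrow> b \<in> PP X \<Longrightarrow> Imp X a b \<in> PP X"
  using H5 by blast+
lemma le_Top[simp]: "a \<in> PP X \<Longrightarrow> Le X a (Top X)" using H6 by blast
lemma le_Meet: "a \<in> PP X \<Longrightarrow> b \<in> PP X \<Longrightarrow> c \<in> PP X \<Longrightarrow> Le X c (Meet X a b) \<longleftrightarrow> Le X c a \<and> Le X c b"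
  using H7 by blast
lemma le_Imp: "a \<in> PP X \<Longrightarrow> b \<in> PP X \<Longrightarrow> c \<in> PP X \<Longrightarrow> Le X c (Imp X a b) \<longleftrightarrow> Le X (Meet X c a) b"
  using H7 by blast

lemma meet_top: "a \<in> PP X \<Longrightarrow> Meet X (Top X) a = a"
proof -
  assume a: "a \<in> PP X"
  have 1: "Le X (Meet X (Top X) a) a"
    using a le_Meet[of "Top X" X a "Meet X (Top X) a"] le_refl[of "Meet X (Top X) a" X] by simp
  have 2: "Le X a (Meet X (Top X) a)"
    using a le_Meet[of "Top X" X a a] by simp
  show ?thesis using le_antisym[OF _ a 1 2] a by simp
qed

lemma Top_le_Imp: "a \<in> PP X \<Longrightarrow> b \<in> PP X \<Longrightarrow> Le X (Top X) (Imp X a b) \<longleftrightarrow> Le X a b"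
  using le_Imp[of a X b "Top X"] meet_top[of a X] by simp

lemma iff_P[simp]: "a \<in> PP X \<Longrightarrow> b \<in> PP X \<Longrightarrow> iff T X a b \<in> PP X"
  unfolding iff_def by simp

lemma Top_le_Meet: "a \<in> PP X \<Longrightarrow> b \<in> PP X \<Longrightarrow> Le X (Top X) (Meet X a b) \<longleftrightarrow> Le X (Top X) a \<and> Le X (Top X) b"
  using le_Meet[of a X b "Top X"] by simp

lemma rx_P[simp]: "Dom f = X \<Longrightarrow> a \<in> PP (Cod f) \<Longrightarrow> rx f a \<in> PP X"
  using tp_rx unfolding hom_def by blast
lemma rx_Id[simp]: "a \<in> PP X \<Longrightarrow> rx (Idm X) a = a"
  using tp_rxid by blast
lemma rx_cmp: "Cod f = Dom g \<Longrightarrow> a \<in> PP (Cod g) \<Longrightarrow> rx (cmp g f) a = rx f (rx g a)"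
  using tp_rxcmp by blast
lemma rx_Top[simp]: "Cod f = Y \<Longrightarrow> rx f (Top Y) = Top (Dom f)"
  using tp_rx unfolding hom_def by blast
lemma rx_Meet[simp]: "Cod f = Y \<Longrightarrow> a \<in> PP Y \<Longrightarrow> b \<in> PP Y \<Longrightarrow> rx f (Meet Y a b) = Meet (Dom f) (rx f a) (rx f b)"
  using tp_rx unfolding hom_def by blast
lemma rx_Imp[simp]: "Cod f = Y \<Longrightarrow> a \<in> PP Y \<Longrightarrow> b \<in> PP Y \<Longrightarrow> rx f (Imp Y a b) = Imp (Dom f) (rx f a) (rx f b)"
  using tp_rx unfolding hom_def by blast

lemma rx_mono: "Le Y a b \<Longrightarrow> Cod f = Y \<Longrightarrow> a \<in> PP Y \<Longrightarrow> b \<in> PP Y \<Longrightarrow> Le (Dom f) (rx f a) (rx f b)"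
proof -
  assume a: "Le Y a b" "Cod f = Y" "a \<in> PP Y" "b \<in> PP Y"
  have m: "Le Y (Meet Y a b) a" using a le_Meet[of a Y b "Meet Y a b"] by simp
  have "Meet Y a b = a" using a le_Meet[of a Y b a] m
    by (intro le_antisym[of _ Y]) (auto simp: le_Meet)
  then have "rx f a = Meet (Dom f) (rx f a) (rx f b)" using a rx_Meet[of f Y a b] by simp
  then show ?thesis using a le_Meet[of "rx f a" "Dom f" "rx f b" "rx f a"] by simp
qed

lemma ex_P[simp]: "Cod f = Y \<Longrightarrow> a \<in> PP (Dom f) \<Longrightarrow> ex f a \<in> PP Y"
  and al_P[simp]: "Cod f = Y \<Longrightarrow> a \<in> PP (Dom f) \<Longrightarrow> al f a \<in> PP Y"
  using tp_adj unfolding hom_def by blast+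

lemma ex_adj: "a \<in> PP (Dom f) \<Longrightarrow> b \<in> PP (Cod f) \<Longrightarrow> Le (Cod f) (ex f a) b \<longleftrightarrow> Le (Dom f) a (rx f b)"
  and al_adj: "a \<in> PP (Dom f) \<Longrightarrow> b \<in> PP (Cod f) \<Longrightarrow> Le (Dom f) (rx f b) a \<longleftrightarrow> Le (Cod f) b (al f a)"
  using tp_adj unfolding hom_def by blast+

lemma ex_unit: "a \<in> PP (Dom f) \<Longrightarrow> Le (Dom f) a (rx f (ex f a))"
  using ex_adj[of a f "ex f a"] by simp
lemma al_counit: "a \<in> PP (Dom f) \<Longrightarrow> Le (Dom f) (rx f (al f a)) a"
  using al_adj[of a f "al f a"] by simp

lemma BC: "is_pullback T g k p r \<Longrightarrow> a \<in> PP (Dom g) \<Longrightarrow>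
   rx k (ex g a) = ex r (rx p a) \<and> rx k (al g a) = al r (rx p a)"
  using tp_bc by blast

definition Hd where "Hd k \<phi> \<longleftrightarrow> Le (Dom k) (Top (Dom k)) (rx k \<phi>)"

lemma Hd_rx: "Cod k = Dom g \<Longrightarrow> \<phi> \<in> PP (Cod g) \<Longrightarrow> Hd k (rx g \<phi>) \<longleftrightarrow> Hd (cmp g k) \<phi>"
  unfolding Hd_def by (simp add: rx_cmp)

lemma Hd_le: "Le X \<phi> \<psi> \<Longrightarrow> Cod k = X \<Longrightarrow> \<phi> \<in> PP X \<Longrightarrow> \<psi> \<in> PP X \<Longrightarrow> Hd k \<phi> \<Longrightarrow> Hd k \<psi>"
  unfolding Hd_def using rx_mono[of X \<phi> \<psi> k] le_trans[of "Dom k" "Top (Dom k)" "rx k \<phi>" "rx k \<psi>"] by simp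

lemma Hd_cmp: "Hd k \<phi> \<Longrightarrow> Cod j = Dom k \<Longrightarrow> \<phi> \<in> PP (Cod k) \<Longrightarrow> Hd (cmp k j) \<phi>"
  unfolding Hd_def using rx_mono[of "Dom k" "Top (Dom k)" "rx k \<phi>" j] by (simp add: rx_cmp)

lemma Hd_Top[simp]: "Cod k = X \<Longrightarrow> Hd k (Top X)"
  unfolding Hd_def by simp

lemma Hd_Meet[simp]: "Cod k = X \<Longrightarrow> a \<in> PP X \<Longrightarrow> b \<in> PP X \<Longrightarrow> Hd k (Meet X a b) \<longleftrightarrow> Hd k a \<and> Hd k b"
  unfolding Hd_def by (simp add: Top_le_Meet)

lemma le_elem: "\<phi> \<in> PP Z \<Longrightarrow> \<psi> \<in> PP Z \<Longrightarrow> (\<And>k. Cod k = Z \<Longrightarrow> Hd k \<phi> \<Longrightarrow> Hd k \<psi>) \<Longrightarrow> Le Z \<phi> \<psi>"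
proof -
  assume a: "\<phi> \<in> PP Z" "\<psi> \<in> PP Z" and h: "\<And>k. Cod k = Z \<Longrightarrow> Hd k \<phi> \<Longrightarrow> Hd k \<psi>"
  obtain c where c: "full_comprehension T Z \<phi> c" using fc a unfolding has_full_comprehensions_def by blast
  have c1: "Cod c = Z" "rx c \<phi> = Top (Dom c)" using c unfolding full_comprehension_def by blast+
  have c2: "Le (Dom c) (rx c \<phi>) (rx c \<psi>) \<longleftrightarrow> Le Z \<phi> \<psi>" using c a unfolding full_comprehension_def by blast
  have "Hd c \<phi>" unfolding Hd_def using c1 by simp
  then have "Hd c \<psi>" using h c1 by blast
  then show ?thesis using c1 c2 unfolding Hd_def by simp
qed

lemma eq_elem: "\<phi> \<in> PP Z \<Longrightarrow> \<psi> \<in> PP Z \<Longrightarrow> (\<And>k. Cod k = Z \<Longrightarrow> Hd k \<phi> \<longleftrightarrow> Hd k \<psi>) \<Longrightarrow> \<phi> = \<psi>"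
  by (rule le_antisym[of _ Z]) (auto intro!: le_elem)

lemma Hd_Imp: "Cod k = X \<Longrightarrow> a \<in> PP X \<Longrightarrow> b \<in> PP X \<Longrightarrow>
   Hd k (Imp X a b) \<longleftrightarrow> (\<forall>j. Cod j = Dom k \<longrightarrow> Hd (cmp k j) a \<longrightarrow> Hd (cmp k j) b)"
proof -
  assume a: "Cod k = X" "a \<in> PP X" "b \<in> PP X"
  have "Hd k (Imp X a b) \<longleftrightarrow> Le (Dom k) (rx k a) (rx k b)"
    unfolding Hd_def using a by (simp add: Top_le_Imp)
  also have "\<dots> \<longleftrightarrow> (\<forall>j. Cod j = Dom k \<longrightarrow> Hd j (rx k a) \<longrightarrow> Hd j (rx k b))"
    using a by (auto intro: le_elem Hd_le)
  also have "\<dots> \<longleftrightarrow> (\<forall>j. Cod j = Dom k \<longrightarrow> Hd (cmp k j) a \<longrightarrow> Hd (cmp k j) b)"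
    using a by (simp add: Hd_rx)
  finally show ?thesis .
qed

lemma Hd_iff: "Cod k = X \<Longrightarrow> a \<in> PP X \<Longrightarrow> b \<in> PP X \<Longrightarrow>
   Hd k (iff T X a b) \<longleftrightarrow> (\<forall>j. Cod j = Dom k \<longrightarrow> (Hd (cmp k j) a \<longleftrightarrow> Hd (cmp k j) b))"
  unfolding iff_def by (auto simp: Hd_Imp)

lemma delta_P[simp]: "delta T A \<in> PP (prd A A)"
  unfolding delta_def by simp

lemma Hd_delta: "Dom f = Dom g \<Longrightarrow> Cod f = A \<Longrightarrow> Cod g = A \<Longrightarrow> Hd (pr f g) (delta T A) \<longleftrightarrow> f = g"
proof -
  assume a: "Dom f = Dom g" "Cod f = A" "Cod g = A"
  have "hom T f (Dom f) A" "hom T g (Dom f) A" using a unfolding hom_def by auto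
  then have "f = g \<longleftrightarrow> Le (Dom f) (Top (Dom f)) (rx (pr f g) (delta T A))"
    using ext unfolding extensional_def by blast
  then show ?thesis unfolding Hd_def using a by simp
qed

lemma Hd_ex_intro: "cmp g w = k \<Longrightarrow> Cod w = Dom g \<Longrightarrow> \<phi> \<in> PP (Dom g) \<Longrightarrow> Hd w \<phi> \<Longrightarrow> Hd k (ex g \<phi>)"
proof -
  assume a: "cmp g w = k" "Cod w = Dom g" "\<phi> \<in> PP (Dom g)" "Hd w \<phi>"
  have "Hd w (rx g (ex g \<phi>))" using Hd_le[OF ex_unit[OF a(3)] a(2) a(3) _ a(4)] a by simp
  then show ?thesis using a Hd_rx[of w g "ex g \<phi>"] by simp
qed

lemma Hd_al_elim: "cmp g w = cmp k j \<Longrightarrow> Cod w = Dom g \<Longrightarrow> Cod j = Dom k \<Longrightarrow> \<phi> \<in> PP (Dom g) \<Longrightarrow>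
  Cod k = Cod g \<Longrightarrow> Hd k (al g \<phi>) \<Longrightarrow> Hd w \<phi>"
proof -
  assume a: "cmp g w = cmp k j" "Cod w = Dom g" "Cod j = Dom k" "\<phi> \<in> PP (Dom g)" "Cod k = Cod g"
    "Hd k (al g \<phi>)"
  have "Hd (cmp k j) (al g \<phi>)" using Hd_cmp[OF a(6) a(3)] a by simp
  then have "Hd w (rx g (al g \<phi>))" using a Hd_rx[of w g "al g \<phi>"] by simp
  then show ?thesis using Hd_le[OF al_counit[OF a(4)] a(2)] a by simp
qed

lemma pb_parts: "is_pullback T g k p r \<Longrightarrow> Cod g = Cod k \<and> Cod p = Dom g \<and> Cod r = Dom k \<and> Dom p = Dom r \<and> cmp g p = cmp k r"
  unfolding is_pullback_def by blast

lemma Hd_al_intro_pb: "is_pullback T g k p r \<Longrightarrow> \<phi> \<in> PP (Dom g) \<Longrightarrow>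
   (\<And>j. Cod j = Dom p \<Longrightarrow> Hd (cmp p j) \<phi>) \<Longrightarrow> Hd k (al g \<phi>)"
proof -
  assume pb: "is_pullback T g k p r" and a: "\<phi> \<in> PP (Dom g)" and h: "\<And>j. Cod j = Dom p \<Longrightarrow> Hd (cmp p j) \<phi>"
  note pp = pb_parts[OF pb]
  have bc: "rx k (al g \<phi>) = al r (rx p \<phi>)" using BC[OF pb a] by blast
  have "Le (Dom p) (Top (Dom p)) (rx p \<phi>)"
    using pp a h by (intro le_elem) (auto simp: Hd_rx)
  then have "Le (Cod r) (Top (Cod r)) (al r (rx p \<phi>))"
    using al_adj[of "rx p \<phi>" r "Top (Cod r)"] pp a by simp
  then show ?thesis unfolding Hd_def using bc pp by simp
qed

lemma Hd_ex_elim_pb: "is_pullback T g k p r \<Longrightarrow> \<phi> \<in> PP (Dom g) \<Longrightarrow> Hd k (ex g \<phi>) \<Longrightarrow> \<psi> \<in> PP (Dom k) \<Longrightarrow>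
   (\<And>j. Cod j = Dom p \<Longrightarrow> Hd (cmp p j) \<phi> \<Longrightarrow> Hd (cmp r j) \<psi>) \<Longrightarrow> Hd (Idm (Dom k)) \<psi>"
proof -
  assume pb: "is_pullback T g k p r" and a: "\<phi> \<in> PP (Dom g)" "Hd k (ex g \<phi>)" "\<psi> \<in> PP (Dom k)"
    and h: "\<And>j. Cod j = Dom p \<Longrightarrow> Hd (cmp p j) \<phi> \<Longrightarrow> Hd (cmp r j) \<psi>"
  note pp = pb_parts[OF pb]
  have bc: "rx k (ex g \<phi>) = ex r (rx p \<phi>)" using BC[OF pb a(1)] by blast
  have "Le (Dom p) (rx p \<phi>) (rx r \<psi>)"
    using pp a h by (intro le_elem) (auto simp: Hd_rx)
  then have 1: "Le (Dom k) (ex r (rx p \<phi>)) \<psi>"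
    using ex_adj[of "rx p \<phi>" r \<psi>] pp a by simp
  have 2: "Le (Dom k) (Top (Dom k)) (ex r (rx p \<phi>))" using a(2) bc unfolding Hd_def by simp
  have "Le (Dom k) (Top (Dom k)) \<psi>" using le_trans[OF 2 1] pp a by simp
  then show ?thesis unfolding Hd_def using a by simp
qed

lemma pb_p2: "Cod k = W \<Longrightarrow> K = Dom k \<Longrightarrow>
  is_pullback T (p2 V W) k (pr (p1 V K) (cmp k (p2 V K))) (p2 V K)"
proof -
  assume k: "Cod k = W" "K = Dom k"
  define p where "p = pr (p1 V K) (cmp k (p2 V K))"
  have pd: "Dom p = prd V K" "Cod p = prd V W" using k unfolding p_def by simp_all
  have pc: "cmp (p2 V W) p = cmp k (p2 V K)" "cmp (p1 V W) p = p1 V K" using k unfolding p_def by simp_all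
  have "\<exists>!w. hom T w (Dom u) (Dom p) \<and> cmp p w = u \<and> cmp (p2 V K) w = v"
    if u: "Cod u = prd V W" "Cod v = K" "Dom u = Dom v" "cmp (p2 V W) u = cmp k v" for u v
  proof
    let ?w = "pr (cmp (p1 V W) u) v"
    have "cmp p ?w = pr (cmp (p1 V W) u) (cmp k v)" using u k unfolding p_def by simp
    also have "\<dots> = u" using u pr_eta[of u V W] by simp
    finally show "hom T ?w (Dom u) (Dom p) \<and> cmp p ?w = u \<and> cmp (p2 V K) ?w = v"
      using u pd unfolding hom_def by simp
  next
    fix w assume w: "hom T w (Dom u) (Dom p) \<and> cmp p w = u \<and> cmp (p2 V K) w = v"
    have "cmp (p1 V W) u = cmp (cmp (p1 V W) p) w" using w pd unfolding hom_def by auto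
    also have "\<dots> = cmp (p1 V K) w" using pc by simp
    finally have "cmp (p1 V K) w = cmp (p1 V W) u" by simp
    then show "w = pr (cmp (p1 V W) u) v" using w pd pr_unique[of w "Dom u" V K] unfolding hom_def by auto
  qed
  then show ?thesis unfolding is_pullback_def p_def[symmetric] using pd pc k by simp
qed


lemma pb_q23: "Cod k = prd B C \<Longrightarrow> K = Dom k \<Longrightarrow>
  is_pullback T (pr (cmp (p2 A B) (p1 (prd A B) C)) (p2 (prd A B) C)) k
     (pr (pr (p1 A K) (cmp (p1 B C) (cmp k (p2 A K)))) (cmp (p2 B C) (cmp k (p2 A K)))) (p2 A K)"
proof -
  assume k: "Cod k = prd B C" "K = Dom k"
  define p where "p = pr (pr (p1 A K) (cmp (p1 B C) (cmp k (p2 A K)))) (cmp (p2 B C) (cmp k (p2 A K)))"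
  define g where "g = pr (cmp (p2 A B) (p1 (prd A B) C)) (p2 (prd A B) C)"
  have gd: "Dom g = prd (prd A B) C" "Cod g = prd B C" unfolding g_def by simp_all
  have pd: "Dom p = prd A K" "Cod p = prd (prd A B) C" using k unfolding p_def by simp_all
  have pc: "cmp g p = cmp k (p2 A K)" "cmp (p1 A B) (cmp (p1 (prd A B) C) p) = p1 A K"
    using k unfolding p_def g_def by simp_all
  have "\<exists>!w. hom T w (Dom u) (Dom p) \<and> cmp p w = u \<and> cmp (p2 A K) w = v"
    if u: "Cod u = prd (prd A B) C" "Cod v = K" "Dom u = Dom v" "cmp g u = cmp k v" for u v
  proof
    let ?w = "pr (cmp (p1 A B) (cmp (p1 (prd A B) C) u)) v"
    have kv1: "cmp (p1 B C) (cmp k v) = cmp (p2 A B) (cmp (p1 (prd A B) C) u)"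
    proof -
      have "cmp (p1 B C) (cmp k v) = cmp (p1 B C) (cmp g u)" by (simp only: u(4))
      also have "\<dots> = cmp (p2 A B) (cmp (p1 (prd A B) C) u)" using u(1-3) unfolding g_def by simp
      finally show ?thesis .
    qed
    have kv2: "cmp (p2 B C) (cmp k v) = cmp (p2 (prd A B) C) u"
    proof -
      have "cmp (p2 B C) (cmp k v) = cmp (p2 B C) (cmp g u)" by (simp only: u(4))
      also have "\<dots> = cmp (p2 (prd A B) C) u" using u(1-3) unfolding g_def by simp
      finally show ?thesis .
    qed
    have "cmp p ?w = pr (pr (cmp (p1 A B) (cmp (p1 (prd A B) C) u)) (cmp (p1 B C) (cmp k v))) (cmp (p2 B C) (cmp k v))"
      using u k unfolding p_def by simp
    also have "\<dots> = u" unfolding kv1 kv2 using u by simp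
    finally show "hom T ?w (Dom u) (Dom p) \<and> cmp p ?w = u \<and> cmp (p2 A K) ?w = v"
      using u pd unfolding hom_def by simp
  next
    fix w assume w: "hom T w (Dom u) (Dom p) \<and> cmp p w = u \<and> cmp (p2 A K) w = v"
    have "cmp (p1 A B) (cmp (p1 (prd A B) C) u) = cmp (cmp (p1 A B) (cmp (p1 (prd A B) C) p)) w"
      using w pd unfolding hom_def by auto
    also have "\<dots> = cmp (p1 A K) w" using pc by simp
    finally have "cmp (p1 A K) w = cmp (p1 A B) (cmp (p1 (prd A B) C) u)" by simp
    then show "w = pr (cmp (p1 A B) (cmp (p1 (prd A B) C) u)) v"
      using w pd pr_unique[of w "Dom u" A K] unfolding hom_def by auto
  qed
  then show ?thesis unfolding is_pullback_def p_def[symmetric] g_def[symmetric] using pd pc k gd by simp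
qed

lemma pb_q13: "Cod k = prd A C \<Longrightarrow> K = Dom k \<Longrightarrow>
  is_pullback T (pr (cmp (p1 A B) (p1 (prd A B) C)) (p2 (prd A B) C)) k
     (pr (pr (cmp (p1 A C) (cmp k (p2 B K))) (p1 B K)) (cmp (p2 A C) (cmp k (p2 B K)))) (p2 B K)"
proof -
  assume k: "Cod k = prd A C" "K = Dom k"
  define p where "p = pr (pr (cmp (p1 A C) (cmp k (p2 B K))) (p1 B K)) (cmp (p2 A C) (cmp k (p2 B K)))"
  define g where "g = pr (cmp (p1 A B) (p1 (prd A B) C)) (p2 (prd A B) C)"
  have gd: "Dom g = prd (prd A B) C" "Cod g = prd A C" unfolding g_def by simp_all
  have pd: "Dom p = prd B K" "Cod p = prd (prd A B) C" using k unfolding p_def by simp_all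
  have pc: "cmp g p = cmp k (p2 B K)" "cmp (p2 A B) (cmp (p1 (prd A B) C) p) = p1 B K"
    using k unfolding p_def g_def by simp_all
  have "\<exists>!w. hom T w (Dom u) (Dom p) \<and> cmp p w = u \<and> cmp (p2 B K) w = v"
    if u: "Cod u = prd (prd A B) C" "Cod v = K" "Dom u = Dom v" "cmp g u = cmp k v" for u v
  proof
    let ?w = "pr (cmp (p2 A B) (cmp (p1 (prd A B) C) u)) v"
    have kv1: "cmp (p1 A C) (cmp k v) = cmp (p1 A B) (cmp (p1 (prd A B) C) u)"
    proof -
      have "cmp (p1 A C) (cmp k v) = cmp (p1 A C) (cmp g u)" by (simp only: u(4))
      also have "\<dots> = cmp (p1 A B) (cmp (p1 (prd A B) C) u)" using u(1-3) unfolding g_def by simp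
      finally show ?thesis .
    qed
    have kv2: "cmp (p2 A C) (cmp k v) = cmp (p2 (prd A B) C) u"
    proof -
      have "cmp (p2 A C) (cmp k v) = cmp (p2 A C) (cmp g u)" by (simp only: u(4))
      also have "\<dots> = cmp (p2 (prd A B) C) u" using u(1-3) unfolding g_def by simp
      finally show ?thesis .
    qed
    have "cmp p ?w = pr (pr (cmp (p1 A C) (cmp k v)) (cmp (p2 A B) (cmp (p1 (prd A B) C) u))) (cmp (p2 A C) (cmp k v))"
      using u k unfolding p_def by simp
    also have "\<dots> = u" unfolding kv1 kv2 using u by simp
    finally show "hom T ?w (Dom u) (Dom p) \<and> cmp p ?w = u \<and> cmp (p2 B K) ?w = v"
      using u pd unfolding hom_def by simp
  next
    fix w assume w: "hom T w (Dom u) (Dom p) \<and> cmp p w = u \<and> cmp (p2 B K) w = v"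
    have "cmp (p2 A B) (cmp (p1 (prd A B) C) u) = cmp (cmp (p2 A B) (cmp (p1 (prd A B) C) p)) w"
      using w pd unfolding hom_def by auto
    also have "\<dots> = cmp (p1 B K) w" using pc by simp
    finally have "cmp (p1 B K) w = cmp (p2 A B) (cmp (p1 (prd A B) C) u)" by simp
    then show "w = pr (cmp (p2 A B) (cmp (p1 (prd A B) C) u)) v"
      using w pd pr_unique[of w "Dom u" B K] unfolding hom_def by auto
  qed
  then show ?thesis unfolding is_pullback_def p_def[symmetric] g_def[symmetric] using pd pc k gd by simp
qed


lemma Hd_Id: "Hd (Idm X) \<psi> \<Longrightarrow> Cod j = X \<Longrightarrow> \<psi> \<in> PP X \<Longrightarrow> Hd j \<psi>"
  using Hd_cmp[of "Idm X" \<psi> j] by simp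

lemma Hd_ex_p2_elim:
  assumes h: "Hd k (ex (p2 V W) \<phi>)" and k: "Cod k = W" and ph: "\<phi> \<in> PP (prd V W)"
    and ps: "\<psi> \<in> PP (Dom k)"
    and H: "\<And>x j. Cod x = V \<Longrightarrow> Cod j = Dom k \<Longrightarrow> Dom x = Dom j \<Longrightarrow> Hd (pr x (cmp k j)) \<phi> \<Longrightarrow> Hd j \<psi>"
  shows "Hd (Idm (Dom k)) \<psi>"
proof (rule Hd_ex_elim_pb[OF pb_p2[OF k refl] _ h ps])
  show "\<phi> \<in> PP (Dom (p2 V W))" using ph by simp
  fix j assume j: "Cod j = Dom (pr (p1 V (Dom k)) (cmp k (p2 V (Dom k))))"
    and hj: "Hd (cmp (pr (p1 V (Dom k)) (cmp k (p2 V (Dom k)))) j) \<phi>"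
  have j': "Cod j = prd V (Dom k)" using j k by simp
  have "cmp (pr (p1 V (Dom k)) (cmp k (p2 V (Dom k)))) j = pr (cmp (p1 V (Dom k)) j) (cmp k (cmp (p2 V (Dom k)) j))"
    using j' k by simp
  then have "Hd (pr (cmp (p1 V (Dom k)) j) (cmp k (cmp (p2 V (Dom k)) j))) \<phi>" using hj by simp
  then show "Hd (cmp (p2 V (Dom k)) j) \<psi>" using H[of "cmp (p1 V (Dom k)) j" "cmp (p2 V (Dom k)) j"] j' by simp
qed

lemma Hd_al_q23_intro:
  assumes bc: "Cod b = B" "Cod c = C" "Dom b = Dom c" and ph: "\<phi> \<in> PP (prd3 T A B C)"
    and H: "\<And>x j. Cod x = A \<Longrightarrow> Cod j = Dom b \<Longrightarrow> Dom x = Dom j \<Longrightarrow> Hd (pr (pr x (cmp b j)) (cmp c j)) \<phi>"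
  shows "Hd (pr b c) (al (pr (q2 T A B C) (q3 T A B C)) \<phi>)"
  unfolding q2_def q3_def
proof (rule Hd_al_intro_pb[OF pb_q23[of "pr b c" B C "Dom b" A]])
  show "Cod (pr b c) = prd B C" "Dom b = Dom (pr b c)" using bc by simp_all
  show "\<phi> \<in> PP (Dom (pr (cmp (p2 A B) (p1 (prd A B) C)) (p2 (prd A B) C)))" using ph by (simp add: prd3_def)
  fix j assume j: "Cod j = Dom (pr (pr (p1 A (Dom b)) (cmp (p1 B C) (cmp (pr b c) (p2 A (Dom b))))) (cmp (p2 B C) (cmp (pr b c) (p2 A (Dom b)))))"
  have j': "Cod j = prd A (Dom b)" using j bc by simp
  have "cmp (pr (pr (p1 A (Dom b)) (cmp (p1 B C) (cmp (pr b c) (p2 A (Dom b))))) (cmp (p2 B C) (cmp (pr b c) (p2 A (Dom b))))) j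
     = pr (pr (cmp (p1 A (Dom b)) j) (cmp b (cmp (p2 A (Dom b)) j))) (cmp c (cmp (p2 A (Dom b)) j))"
    using j' bc by simp
  then show "Hd (cmp (pr (pr (p1 A (Dom b)) (cmp (p1 B C) (cmp (pr b c) (p2 A (Dom b))))) (cmp (p2 B C) (cmp (pr b c) (p2 A (Dom b))))) j) \<phi>"
    using H[of "cmp (p1 A (Dom b)) j" "cmp (p2 A (Dom b)) j"] j' by simp
qed

lemma Hd_al_q13_intro:
  assumes ac: "Cod a = A" "Cod c = C" "Dom a = Dom c" and ph: "\<phi> \<in> PP (prd3 T A B C)"
    and H: "\<And>x j. Cod x = B \<Longrightarrow> Cod j = Dom a \<Longrightarrow> Dom x = Dom j \<Longrightarrow> Hd (pr (pr (cmp a j) x) (cmp c j)) \<phi>"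
  shows "Hd (pr a c) (al (pr (q1 T A B C) (q3 T A B C)) \<phi>)"
  unfolding q1_def q3_def
proof (rule Hd_al_intro_pb[OF pb_q13[of "pr a c" A C "Dom a" B]])
  show "Cod (pr a c) = prd A C" "Dom a = Dom (pr a c)" using ac by simp_all
  show "\<phi> \<in> PP (Dom (pr (cmp (p1 A B) (p1 (prd A B) C)) (p2 (prd A B) C)))" using ph by (simp add: prd3_def)
  fix j assume j: "Cod j = Dom (pr (pr (cmp (p1 A C) (cmp (pr a c) (p2 B (Dom a)))) (p1 B (Dom a))) (cmp (p2 A C) (cmp (pr a c) (p2 B (Dom a)))))"
  have j': "Cod j = prd B (Dom a)" using j ac by simp
  have "cmp (pr (pr (cmp (p1 A C) (cmp (pr a c) (p2 B (Dom a)))) (p1 B (Dom a))) (cmp (p2 A C) (cmp (pr a c) (p2 B (Dom a))))) j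
     = pr (pr (cmp a (cmp (p2 B (Dom a)) j)) (cmp (p1 B (Dom a)) j)) (cmp c (cmp (p2 B (Dom a)) j))"
    using j' ac by simp
  then show "Hd (cmp (pr (pr (cmp (p1 A C) (cmp (pr a c) (p2 B (Dom a)))) (p1 B (Dom a))) (cmp (p2 A C) (cmp (pr a c) (p2 B (Dom a))))) j) \<phi>"
    using H[of "cmp (p1 B (Dom a)) j" "cmp (p2 B (Dom a)) j"] j' by simp
qed

end

locale qs0 = trip T for T :: "('o,'m,'p) tripos_data" +
  fixes A PA m \<rho>
  assumes sp: "strong_power T A PA m" and eqr: "equiv_rel T A \<rho>"
begin

lemma m_P[simp]: "m \<in> PP (prd A PA)" using sp unfolding strong_power_def weak_power_def by blast
lemma rho_P[simp]: "\<rho> \<in> PP (prd A A)" using eqr unfolding equiv_rel_def by blast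

lemma wp: "\<gamma> \<in> PP (prd A Y) \<Longrightarrow> \<exists>c. hom T c Y PA \<and> \<gamma> = rx (cross T (Idm A) c) m"
  using sp unfolding strong_power_def weak_power_def by blast

lemma deltaPA: "delta T PA = al (pr (q2 T A PA PA) (q3 T A PA PA))
        (iff T (prd3 T A PA PA) (rx (pr (q1 T A PA PA) (q2 T A PA PA)) m) (rx (pr (q1 T A PA PA) (q3 T A PA PA)) m))"
  using sp unfolding strong_power_def by blast

abbreviation "\<Psi> \<equiv> iff T (prd3 T A A PA)
                (rx (pr (q1 T A A PA) (q2 T A A PA)) \<rho>)
                (rx (pr (q2 T A A PA) (q3 T A A PA)) m)"
abbreviation "\<Phi> \<equiv> Meet (prd A PA) m (al (pr (q1 T A A PA) (q3 T A A PA)) \<Psi>)"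
abbreviation "\<sigma> \<equiv> class_formula T A PA m \<rho>"

lemma sig_def: "\<sigma> = ex (p2 A PA) \<Phi>" unfolding class_formula_def by simp

lemma Psi_P[simp]: "\<Psi> \<in> PP (prd3 T A A PA)" by (simp add: q1_def q2_def q3_def prd3_def)
lemma Phi_P[simp]: "\<Phi> \<in> PP (prd A PA)" using Psi_P by (simp add: q1_def q2_def q3_def prd3_def)
lemma sig_P[simp]: "\<sigma> \<in> PP PA" unfolding sig_def by simp

lemma "\<rho> \<in> PP (prd A A)" by simp
lemma "\<rho> \<in> PP (prd A A)" using rho_P by assumption
lemma R_refl: "Cod a = A \<Longrightarrow> Hd (pr a a) \<rho>"
  using eqr unfolding equiv_rel_def
  by (intro Hd_le[of "prd A A" "delta T A" \<rho>]) (auto simp: Hd_delta)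

lemma R_sym: "Hd (pr a b) \<rho> \<Longrightarrow> Cod a = A \<Longrightarrow> Cod b = A \<Longrightarrow> Dom a = Dom b \<Longrightarrow> Hd (pr b a) \<rho>"
proof -
  assume h: "Hd (pr a b) \<rho>" "Cod a = A" "Cod b = A" "Dom a = Dom b"
  have "Le (prd A A) \<rho> (rx (pr (p2 A A) (p1 A A)) \<rho>)" using eqr unfolding equiv_rel_def by blast
  then have "Hd (pr a b) (rx (pr (p2 A A) (p1 A A)) \<rho>)" using Hd_le[OF _ _ _ _ h(1)] h by simp
  then show ?thesis using h by (simp add: Hd_rx)
qed

lemma R_trans: "Hd (pr a b) \<rho> \<Longrightarrow> Hd (pr b d) \<rho> \<Longrightarrow> Cod a = A \<Longrightarrow> Cod b = A \<Longrightarrow> Cod d = A \<Longrightarrow>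
   Dom a = Dom b \<Longrightarrow> Dom b = Dom d \<Longrightarrow> Hd (pr a d) \<rho>"
proof -
  assume h: "Hd (pr a b) \<rho>" "Hd (pr b d) \<rho>" "Cod a = A" "Cod b = A" "Cod d = A" "Dom a = Dom b" "Dom b = Dom d"
  have le: "Le (prd3 T A A A)
       (Meet (prd3 T A A A) (rx (pr (q1 T A A A) (q2 T A A A)) \<rho>) (rx (pr (q2 T A A A) (q3 T A A A)) \<rho>))
       (rx (pr (q1 T A A A) (q3 T A A A)) \<rho>)" using eqr unfolding equiv_rel_def by blast
  have "Hd (pr (pr a b) d) (Meet (prd3 T A A A) (rx (pr (q1 T A A A) (q2 T A A A)) \<rho>) (rx (pr (q2 T A A A) (q3 T A A A)) \<rho>))"
    using h by (simp add: Hd_rx q1_def q2_def q3_def prd3_def)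
  then have "Hd (pr (pr a b) d) (rx (pr (q1 T A A A) (q3 T A A A)) \<rho>)"
    using h by (intro Hd_le[OF le]) (auto simp: q1_def q2_def q3_def prd3_def)
  then show ?thesis using h by (simp add: Hd_rx q1_def q2_def q3_def prd3_def)
qed

lemma Hd_pr_cmp: "Hd (pr a b) \<phi> \<Longrightarrow> Cod j = Dom a \<Longrightarrow> Dom a = Dom b \<Longrightarrow> \<phi> \<in> PP (prd (Cod a) (Cod b)) \<Longrightarrow>
   Hd (pr (cmp a j) (cmp b j)) \<phi>"
  using Hd_cmp[of "pr a b" \<phi> j] by simp


definition e where "e = (SOME e. Dom e = A \<and> Cod e = PA \<and> \<rho> = rx (cross T (Idm A) e) m)"

lemma e_props: "Dom e = A" "Cod e = PA" "\<rho> = rx (cross T (Idm A) e) m"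
proof -
  obtain c where "hom T c A PA \<and> \<rho> = rx (cross T (Idm A) c) m" using wp[OF rho_P] by blast
  then have "Dom c = A \<and> Cod c = PA \<and> \<rho> = rx (cross T (Idm A) c) m" unfolding hom_def by blast
  then have "Dom e = A \<and> Cod e = PA \<and> \<rho> = rx (cross T (Idm A) e) m"
    unfolding e_def by (rule someI)
  then show "Dom e = A" "Cod e = PA" "\<rho> = rx (cross T (Idm A) e) m" by auto
qed

lemma e_dom[simp]: "Dom e = A" and e_cod[simp]: "Cod e = PA" using e_props by auto

lemma M_e: "Cod x = A \<Longrightarrow> Cod a = A \<Longrightarrow> Dom x = Dom a \<Longrightarrow> Hd (pr x (cmp e a)) m \<longleftrightarrow> Hd (pr x a) \<rho>"
proof -
  assume h: "Cod x = A" "Cod a = A" "Dom x = Dom a"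
  have "Hd (pr x a) \<rho> = Hd (pr x a) (rx (cross T (Idm A) e) m)" using e_props(3) by simp
  also have "\<dots> = Hd (cmp (cross T (Idm A) e) (pr x a)) m"
    using h by (intro Hd_rx) (simp_all add: cross_def)
  also have "cmp (cross T (Idm A) e) (pr x a) = pr x (cmp e a)"
    using h by (simp add: cross_def)
  finally show ?thesis by simp
qed

lemma ExtPA:
  assumes S: "Cod S = PA" "Cod S' = PA" "Dom S = Dom S'"
    and H: "\<And>x j. Cod x = A \<Longrightarrow> Cod j = Dom S \<Longrightarrow> Dom x = Dom j \<Longrightarrow>
              (Hd (pr x (cmp S j)) m \<longleftrightarrow> Hd (pr x (cmp S' j)) m)"
  shows "S = S'"
proof -
  have "Hd (pr S S') (delta T PA)"
    unfolding deltaPA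
  proof (rule Hd_al_q23_intro)
    show "Cod S = PA" "Cod S' = PA" "Dom S = Dom S'" by (fact S)+
    show "iff T (prd3 T A PA PA) (rx (pr (q1 T A PA PA) (q2 T A PA PA)) m) (rx (pr (q1 T A PA PA) (q3 T A PA PA)) m)
       \<in> PP (prd3 T A PA PA)" by (simp add: q1_def q2_def q3_def prd3_def)
    fix x j assume xj: "Cod x = A" "Cod j = Dom S" "Dom x = Dom j"
    show "Hd (pr (pr x (cmp S j)) (cmp S' j))
       (iff T (prd3 T A PA PA) (rx (pr (q1 T A PA PA) (q2 T A PA PA)) m) (rx (pr (q1 T A PA PA) (q3 T A PA PA)) m))"
    proof (subst Hd_iff)
      show "Cod (pr (pr x (cmp S j)) (cmp S' j)) = prd3 T A PA PA" using xj S by (simp add: prd3_def)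
      show "\<forall>j'. Cod j' = Dom (pr (pr x (cmp S j)) (cmp S' j)) \<longrightarrow>
        Hd (cmp (pr (pr x (cmp S j)) (cmp S' j)) j') (rx (pr (q1 T A PA PA) (q2 T A PA PA)) m) =
        Hd (cmp (pr (pr x (cmp S j)) (cmp S' j)) j') (rx (pr (q1 T A PA PA) (q3 T A PA PA)) m)"
      proof (intro allI impI)
        fix j' assume j': "Cod j' = Dom (pr (pr x (cmp S j)) (cmp S' j))"
        then have j'': "Cod j' = Dom x" using xj S by simp
        have "Hd (cmp (pr (pr x (cmp S j)) (cmp S' j)) j') (rx (pr (q1 T A PA PA) (q2 T A PA PA)) m)
          = Hd (pr (cmp x j') (cmp S (cmp j j'))) m"
          using xj S j'' by (subst Hd_rx) (simp_all add: q1_def q2_def q3_def prd3_def)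
        also have "\<dots> = Hd (pr (cmp x j') (cmp S' (cmp j j'))) m"
          using H[of "cmp x j'" "cmp j j'"] xj j'' by simp
        also have "\<dots> = Hd (cmp (pr (pr x (cmp S j)) (cmp S' j)) j') (rx (pr (q1 T A PA PA) (q3 T A PA PA)) m)"
          using xj S j'' by (subst Hd_rx) (simp_all add: q1_def q2_def q3_def prd3_def)
        finally show "Hd (cmp (pr (pr x (cmp S j)) (cmp S' j)) j') (rx (pr (q1 T A PA PA) (q2 T A PA PA)) m) =
          Hd (cmp (pr (pr x (cmp S j)) (cmp S' j)) j') (rx (pr (q1 T A PA PA) (q3 T A PA PA)) m)" .
      qed
    qed (simp_all add: q1_def q2_def q3_def prd3_def)
  qed
  then show ?thesis using S Hd_delta by simp
qed


lemma R_sym_iff: "Cod a = A \<Longrightarrow> Cod b = A \<Longrightarrow> Dom a = Dom b \<Longrightarrow> Hd (pr a b) \<rho> \<longleftrightarrow> Hd (pr b a) \<rho>"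
  using R_sym by metis

lemma Psi_elem: "Cod y = A \<Longrightarrow> Cod x = A \<Longrightarrow> Cod S = PA \<Longrightarrow> Dom y = Dom x \<Longrightarrow> Dom x = Dom S \<Longrightarrow>
  Hd (pr (pr y x) S) \<Psi> \<longleftrightarrow> (\<forall>j. Cod j = Dom x \<longrightarrow> (Hd (pr (cmp y j) (cmp x j)) \<rho> \<longleftrightarrow> Hd (pr (cmp x j) (cmp S j)) m))"
proof -
  assume h: "Cod y = A" "Cod x = A" "Cod S = PA" "Dom y = Dom x" "Dom x = Dom S"
  have "Hd (pr (pr y x) S) \<Psi> \<longleftrightarrow> (\<forall>j. Cod j = Dom (pr (pr y x) S) \<longrightarrow>
      (Hd (cmp (pr (pr y x) S) j) (rx (pr (q1 T A A PA) (q2 T A A PA)) \<rho>) \<longleftrightarrow>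
       Hd (cmp (pr (pr y x) S) j) (rx (pr (q2 T A A PA) (q3 T A A PA)) m)))"
    using h by (intro Hd_iff) (simp_all add: q1_def q2_def q3_def prd3_def)
  also have "\<dots> \<longleftrightarrow> (\<forall>j. Cod j = Dom x \<longrightarrow> (Hd (pr (cmp y j) (cmp x j)) \<rho> \<longleftrightarrow> Hd (pr (cmp x j) (cmp S j)) m))"
    using h by (simp add: Hd_rx q1_def q2_def q3_def prd3_def)
  finally show ?thesis .
qed

lemma Hd_e_sig: "Hd e \<sigma>"
  unfolding sig_def
proof (rule Hd_ex_intro[where w="pr (Idm A) e"])
  show "cmp (p2 A PA) (pr (Idm A) e) = e" "Cod (pr (Idm A) e) = Dom (p2 A PA)" "\<Phi> \<in> PP (Dom (p2 A PA))"
    by simp_all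
  have 1: "Hd (pr (Idm A) e) m" using M_e[of "Idm A" "Idm A"] R_refl[of "Idm A"] by simp
  have 2: "Hd (pr (Idm A) e) (al (pr (q1 T A A PA) (q3 T A A PA)) \<Psi>)"
  proof (rule Hd_al_q13_intro)
    show "Cod (Idm A) = A" "Cod e = PA" "Dom (Idm A) = Dom e" "\<Psi> \<in> PP (prd3 T A A PA)" by simp_all
    fix x j assume xj: "Cod x = A" "Cod j = Dom (Idm A)" "Dom x = Dom j"
    show "Hd (pr (pr (cmp (Idm A) j) x) (cmp e j)) \<Psi>"
      using xj by (simp add: Psi_elem M_e R_sym_iff)
  qed
  have 3: "al (pr (q1 T A A PA) (q3 T A A PA)) \<Psi> \<in> PP (prd A PA)"
    using Psi_P by (simp add: q1_def q3_def prd3_def)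
  show "Hd (pr (Idm A) e) \<Phi>" using 1 2 3 Hd_Meet[of "pr (Idm A) e" "prd A PA" m "al (pr (q1 T A A PA) (q3 T A A PA)) \<Psi>"]
    by simp
qed

lemma e_sig: "rx e \<sigma> = Top A"
  using Hd_e_sig unfolding Hd_def by (intro le_antisym[of _ A]) simp_all


end

locale qs = qs0 T A PA m \<rho> for T :: "('o,'m,'p) tripos_data" and A PA m \<rho> +
  fixes c assumes fcs: "full_comprehension T PA (class_formula T A PA m \<rho>) c"
begin

lemma c_cod[simp]: "Cod c = PA" and c_sig: "rx c \<sigma> = Top (Dom c)"
  using fcs unfolding full_comprehension_def by blast+

lemma c_univ: "Cod f = PA \<Longrightarrow> rx f \<sigma> = Top (Dom f) \<Longrightarrow> \<exists>!h. hom T h (Dom f) (Dom c) \<and> cmp c h = f"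
  using fcs unfolding full_comprehension_def by blast

lemma c_mono: "Cod u = Dom c \<Longrightarrow> Cod v = Dom c \<Longrightarrow> Dom u = Dom v \<Longrightarrow> cmp c u = cmp c v \<Longrightarrow> u = v"
proof -
  assume h: "Cod u = Dom c" "Cod v = Dom c" "Dom u = Dom v" "cmp c u = cmp c v"
  have "rx (cmp c u) \<sigma> = Top (Dom (cmp c u))" using h c_sig by (simp add: rx_cmp)
  then have "\<exists>!k. hom T k (Dom (cmp c u)) (Dom c) \<and> cmp c k = cmp c u" using h by (intro c_univ) simp_all
  then show ?thesis using h unfolding hom_def by auto
qed

definition q where "q = (THE h. hom T h A (Dom c) \<and> cmp c h = e)"

lemma q_props: "Dom q = A" "Cod q = Dom c" "cmp c q = e"
proof -
  have "\<exists>!h. hom T h (Dom e) (Dom c) \<and> cmp c h = e" using e_sig by (intro c_univ) simp_all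
  then have "hom T q A (Dom c) \<and> cmp c q = e" unfolding q_def e_dom by (rule theI')
  then show "Dom q = A" "Cod q = Dom c" "cmp c q = e" unfolding hom_def by auto
qed

lemma q_dom[simp]: "Dom q = A" and q_cod[simp]: "Cod q = Dom c" using q_props by auto

lemma cq: "Cod a = A \<Longrightarrow> cmp c (cmp q a) = cmp e a"
proof -
  assume a: "Cod a = A"
  have "cmp c (cmp q a) = cmp (cmp c q) a" using a by simp
  then show ?thesis using q_props(3) by simp
qed

lemma R_iff_q: "Cod a = A \<Longrightarrow> Cod b = A \<Longrightarrow> Dom a = Dom b \<Longrightarrow> Hd (pr a b) \<rho> \<longleftrightarrow> cmp q a = cmp q b"
proof -
  assume h: "Cod a = A" "Cod b = A" "Dom a = Dom b"
  have ca: "cmp c (cmp q a) = cmp e a" and cb: "cmp c (cmp q b) = cmp e b" using h cq by simp_all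
  show ?thesis
  proof
    assume r: "Hd (pr a b) \<rho>"
    have "cmp e a = cmp e b"
    proof (rule ExtPA)
      show "Cod (cmp e a) = PA" "Cod (cmp e b) = PA" "Dom (cmp e a) = Dom (cmp e b)" using h by simp_all
      fix x j assume xj: "Cod x = A" "Cod j = Dom (cmp e a)" "Dom x = Dom j"
      have j: "Cod j = Dom a" using xj h by simp
      have rj: "Hd (pr (cmp a j) (cmp b j)) \<rho>" using Hd_pr_cmp[OF r j] h by simp
      have "Hd (pr x (cmp (cmp e a) j)) m \<longleftrightarrow> Hd (pr x (cmp a j)) \<rho>" using xj h j M_e[of x "cmp a j"] by simp
      also have "\<dots> \<longleftrightarrow> Hd (pr x (cmp b j)) \<rho>"
      proof
        assume "Hd (pr x (cmp a j)) \<rho>"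
        then show "Hd (pr x (cmp b j)) \<rho>" using R_trans[OF _ rj] xj h j by simp
      next
        assume "Hd (pr x (cmp b j)) \<rho>"
        then show "Hd (pr x (cmp a j)) \<rho>" using R_trans[OF _ R_sym[OF rj]] xj h j by simp
      qed
      also have "\<dots> \<longleftrightarrow> Hd (pr x (cmp (cmp e b) j)) m" using xj h j M_e[of x "cmp b j"] by simp
      finally show "Hd (pr x (cmp (cmp e a) j)) m \<longleftrightarrow> Hd (pr x (cmp (cmp e b) j)) m" .
    qed
    then show "cmp q a = cmp q b" using c_mono[of "cmp q a" "cmp q b"] ca cb h by simp
  next
    assume "cmp q a = cmp q b"
    then have eab: "cmp e a = cmp e b" using ca cb by simp
    have "Hd (pr a (cmp e a)) m" using M_e[of a a] R_refl[of a] h by simp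
    then have "Hd (pr a (cmp e b)) m" using eab by simp
    then show "Hd (pr a b) \<rho>" using M_e[of a b] h by simp
  qed
qed


lemma surj:
  assumes s: "Cod s = Dom c" and ps: "\<psi> \<in> PP (Dom s)"
    and H: "\<And>j a. Cod j = Dom s \<Longrightarrow> Cod a = A \<Longrightarrow> Dom a = Dom j \<Longrightarrow> cmp s j = cmp q a \<Longrightarrow> Hd j \<psi>"
  shows "Hd (Idm (Dom s)) \<psi>"
proof -
  have "rx (cmp c s) \<sigma> = Top (Dom s)" using s c_sig by (simp add: rx_cmp)
  then have hs: "Hd (cmp c s) (ex (p2 A PA) \<Phi>)" unfolding Hd_def sig_def[symmetric] using s by simp
  have "Hd (Idm (Dom (cmp c s))) \<psi>"
  proof (rule Hd_ex_p2_elim[OF hs])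
    show "Cod (cmp c s) = PA" "\<Phi> \<in> PP (prd A PA)" "\<psi> \<in> PP (Dom (cmp c s))" using s ps by simp_all
    fix x j assume xj: "Cod x = A" "Cod j = Dom (cmp c s)" "Dom x = Dom j" and hx: "Hd (pr x (cmp (cmp c s) j)) \<Phi>"
    have j: "Cod j = Dom s" using xj s by simp
    define S where "S = cmp c (cmp s j)"
    have S: "Cod S = PA" "Dom S = Dom x" using j s xj unfolding S_def by simp_all
    have al_P': "al (pr (q1 T A A PA) (q3 T A A PA)) \<Psi> \<in> PP (prd A PA)"
      using Psi_P by (simp add: q1_def q3_def prd3_def)
    have hx': "Hd (pr x S) (al (pr (q1 T A A PA) (q3 T A A PA)) \<Psi>)"
      using hx j s xj al_P' Hd_Meet[of "pr x S" "prd A PA" m "al (pr (q1 T A A PA) (q3 T A A PA)) \<Psi>"]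
      unfolding S_def by simp
    have "S = cmp e x"
    proof (rule ExtPA)
      show "Cod S = PA" "Cod (cmp e x) = PA" "Dom S = Dom (cmp e x)" using S xj by simp_all
      fix y j' assume yj: "Cod y = A" "Cod j' = Dom S" "Dom y = Dom j'"
      have j': "Cod j' = Dom x" using yj S by simp
      have "Hd (pr (pr (cmp x j') y) (cmp S j')) \<Psi>"
      proof (rule Hd_al_elim[OF _ _ _ _ _ hx'])
        show "cmp (pr (q1 T A A PA) (q3 T A A PA)) (pr (pr (cmp x j') y) (cmp S j')) = cmp (pr x S) j'"
          using j' yj xj S by (simp add: q1_def q3_def)
      qed (use j' yj xj S in \<open>simp_all add: q1_def q2_def q3_def prd3_def\<close>)
      then have allj: "\<forall>j''. Cod j'' = Dom y \<longrightarrow> (Hd (pr (cmp (cmp x j') j'') (cmp y j'')) \<rho> \<longleftrightarrow> Hd (pr (cmp y j'') (cmp (cmp S j') j'')) m)"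
        using Psi_elem[of "cmp x j'" y "cmp S j'"] j' yj xj S by simp
      have "Hd (pr (cmp x j') y) \<rho> \<longleftrightarrow> Hd (pr y (cmp S j')) m"
        using allj[rule_format, of "Idm (Dom y)"] j' yj xj S by simp
      then have "Hd (pr y (cmp S j')) m \<longleftrightarrow> Hd (pr y (cmp x j')) \<rho>"
        using R_sym_iff[of "cmp x j'" y] j' yj xj by simp
      also have "\<dots> \<longleftrightarrow> Hd (pr y (cmp (cmp e x) j')) m" using M_e[of y "cmp x j'"] j' yj xj by simp
      finally show "Hd (pr y (cmp S j')) m \<longleftrightarrow> Hd (pr y (cmp (cmp e x) j')) m" .
    qed
    then have "cmp c (cmp s j) = cmp c (cmp q x)" using cq xj unfolding S_def by simp
    then have "cmp s j = cmp q x" using c_mono[of "cmp s j" "cmp q x"] j s xj by simp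
    then show "Hd j \<psi>" using H[of j x] j xj by simp
  qed
  then show ?thesis using s by simp
qed


lemma cross_eq: "Dom f = X \<Longrightarrow> Dom g = Z \<Longrightarrow> cross T f g = pr (cmp f (p1 X Z)) (cmp g (p2 X Z))"
  unfolding cross_def by simp

lemma q_eq: "\<rho> = rx (cross T q q) (delta T (Cod q))"
proof (rule eq_elem[of _ "prd A A"])
  show "\<rho> \<in> PP (prd A A)" "rx (cross T q q) (delta T (Cod q)) \<in> PP (prd A A)"
    by (simp_all add: cross_eq)
  fix k assume k: "Cod k = prd A A"
  define a where "a = cmp (p1 A A) k"
  define b where "b = cmp (p2 A A) k"
  have ab: "Cod a = A" "Cod b = A" "Dom a = Dom b"
    using k unfolding a_def b_def by simp_all
  have kab: "k = pr a b" using k unfolding a_def b_def by simp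
  have "Hd k (rx (cross T q q) (delta T (Cod q))) \<longleftrightarrow> Hd (cmp (cross T q q) k) (delta T (Cod q))"
    using k by (intro Hd_rx) (simp_all add: cross_eq)
  also have "cmp (cross T q q) k = pr (cmp q a) (cmp q b)"
    using k unfolding a_def b_def by (simp add: cross_eq)
  also have "Hd (pr (cmp q a) (cmp q b)) (delta T (Cod q)) \<longleftrightarrow> cmp q a = cmp q b"
    using ab by (intro Hd_delta) simp_all
  also have "\<dots> \<longleftrightarrow> Hd (pr a b) \<rho>" using R_iff_q[of a b] ab by simp
  finally show "Hd k \<rho> \<longleftrightarrow> Hd k (rx (cross T q q) (delta T (Cod q)))" using kab by simp
qed

end

context qs begin

lemma q_epi: "Cod h = Y \<Longrightarrow> Cod h' = Y \<Longrightarrow> Dom h = Dom c \<Longrightarrow> Dom h' = Dom c \<Longrightarrow> cmp h q = cmp h' q \<Longrightarrow> h = h'"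
proof -
  assume h: "Cod h = Y" "Cod h' = Y" "Dom h = Dom c" "Dom h' = Dom c" "cmp h q = cmp h' q"
  have "Hd (Idm (Dom (Idm (Dom c)))) (rx (pr h h') (delta T Y))"
  proof (rule surj)
    show "Cod (Idm (Dom c)) = Dom c" "rx (pr h h') (delta T Y) \<in> PP (Dom (Idm (Dom c)))" using h by simp_all
    fix j a assume ja: "Cod j = Dom (Idm (Dom c))" "Cod a = A" "Dom a = Dom j" "cmp (Idm (Dom c)) j = cmp q a"
    have jq: "j = cmp q a" using ja by simp
    have "cmp h j = cmp (cmp h q) a" using jq ja h(1-4) by simp
    also have "\<dots> = cmp (cmp h' q) a" by (simp only: h(5))
    also have "\<dots> = cmp h' j" using jq ja h(1-4) by simp
    finally have "Hd (pr (cmp h j) (cmp h' j)) (delta T Y)" using ja h by (subst Hd_delta) simp_all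
    then show "Hd j (rx (pr h h') (delta T Y))" using ja h by (subst Hd_rx) simp_all
  qed
  then have "Hd (pr h h') (delta T Y)" using h Hd_rx[of "Idm (Dom c)" "pr h h'" "delta T Y"] by simp
  then show "h = h'" using h Hd_delta by simp
qed


lemma cmp_eq_cong: "cmp g a = cmp h b \<Longrightarrow> Cod j = Dom a \<Longrightarrow> Cod a = Dom g \<Longrightarrow> Cod b = Dom h \<Longrightarrow> Dom a = Dom b \<Longrightarrow>
  cmp g (cmp a j) = cmp h (cmp b j)"
proof -
  assume h: "cmp g a = cmp h b" "Cod j = Dom a" "Cod a = Dom g" "Cod b = Dom h" "Dom a = Dom b"
  have "cmp g (cmp a j) = cmp (cmp g a) j" using h(2-5) by simp
  also have "\<dots> = cmp (cmp h b) j" by (simp only: h(1))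
  also have "\<dots> = cmp h (cmp b j)" using h(2-5) by simp
  finally show ?thesis .
qed

lemma q_exists:
  assumes f: "Dom f = A" and fr: "Le (prd A A) \<rho> (rx (cross T f f) (delta T (Cod f)))"
  shows "\<exists>h. hom T h (Dom c) (Cod f) \<and> cmp h q = f"
proof -
  define X where "X = Dom c"
  define Y where "Y = Cod f"
  have fY: "Cod f = Y" unfolding Y_def by simp
  have qX: "Cod q = X" unfolding X_def by simp
  have f_resp: "cmp f a = cmp f b" if ab: "Cod a = A" "Cod b = A" "Dom a = Dom b" "cmp q a = cmp q b" for a b
  proof -
    have "Hd (pr a b) \<rho>" using R_iff_q[of a b] ab by simp
    then have "Hd (pr a b) (rx (cross T f f) (delta T Y))"
      using Hd_le[OF fr[unfolded fY]] ab f fY by (simp add: cross_eq)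
    then have "Hd (pr (cmp f a) (cmp f b)) (delta T Y)"
      using ab f fY by (subst (asm) Hd_rx) (simp_all add: cross_eq)
    then show ?thesis using ab f fY Hd_delta by simp
  qed
  define XY where "XY = prd X Y"
  define \<Theta> where "\<Theta> = Meet (prd A XY) (rx (pr (cmp q (p1 A XY)) (cmp (p1 X Y) (p2 A XY))) (delta T X))
      (rx (pr (cmp f (p1 A XY)) (cmp (p2 X Y) (p2 A XY))) (delta T Y))"
  have Th_P: "\<Theta> \<in> PP (prd A XY)" unfolding \<Theta>_def XY_def using f fY qX by simp
  have Hd_Th: "Hd (pr a (pr s y)) \<Theta> \<longleftrightarrow> (cmp q a = s \<and> cmp f a = y)"
    if a: "Cod a = A" "Cod s = X" "Cod y = Y" "Dom a = Dom s" "Dom s = Dom y" for a s y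
  proof -
    have "Hd (pr a (pr s y)) \<Theta> \<longleftrightarrow> Hd (pr a (pr s y)) (rx (pr (cmp q (p1 A XY)) (cmp (p1 X Y) (p2 A XY))) (delta T X))
       \<and> Hd (pr a (pr s y)) (rx (pr (cmp f (p1 A XY)) (cmp (p2 X Y) (p2 A XY))) (delta T Y))"
      unfolding \<Theta>_def XY_def using a f fY qX by (subst Hd_Meet) simp_all
    also have "\<dots> \<longleftrightarrow> Hd (pr (cmp q a) s) (delta T X) \<and> Hd (pr (cmp f a) y) (delta T Y)"
      unfolding XY_def using a f fY qX by (simp add: Hd_rx)
    also have "\<dots> \<longleftrightarrow> (cmp q a = s \<and> cmp f a = y)" using a f fY qX Hd_delta by simp
    finally show ?thesis .
  qed
  define F where "F = ex (p2 A XY) \<Theta>"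
  have F_P: "F \<in> PP (prd X Y)" unfolding F_def using Th_P XY_def by simp
  have F_intro: "Hd (pr s y) F"
    if a: "Cod a = A" "Cod s = X" "Cod y = Y" "Dom a = Dom s" "Dom s = Dom y" "cmp q a = s" "cmp f a = y" for a s y
    unfolding F_def
  proof (rule Hd_ex_intro[where w="pr a (pr s y)"])
    show "cmp (p2 A XY) (pr a (pr s y)) = pr s y" "Cod (pr a (pr s y)) = Dom (p2 A XY)" "\<Theta> \<in> PP (Dom (p2 A XY))"
      using a Th_P unfolding XY_def by simp_all
    show "Hd (pr a (pr s y)) \<Theta>" using Hd_Th a by simp
  qed
  have F_sv: "y = y'"
    if a: "Cod s = X" "Cod y = Y" "Cod y' = Y" "Dom s = Dom y" "Dom s = Dom y'" "Hd (pr s y) F" "Hd (pr s y') F"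
    for s y y'
  proof -
    have "Hd (Idm (Dom (pr s y))) (rx (pr y y') (delta T Y))"
    proof (rule Hd_ex_p2_elim[OF a(6)[unfolded F_def]])
      show "Cod (pr s y) = XY" "\<Theta> \<in> PP (prd A XY)" "rx (pr y y') (delta T Y) \<in> PP (Dom (pr s y))"
        using a Th_P unfolding XY_def by simp_all
      fix a1 j assume aj: "Cod a1 = A" "Cod j = Dom (pr s y)" "Dom a1 = Dom j" and h1: "Hd (pr a1 (cmp (pr s y) j)) \<Theta>"
      have j: "Cod j = Dom s" using aj a by simp
      have e1: "cmp q a1 = cmp s j" "cmp f a1 = cmp y j" using h1 Hd_Th[of a1 "cmp s j" "cmp y j"] aj a j by simp_all
      have h2: "Hd (pr (cmp s j) (cmp y' j)) F" using Hd_pr_cmp[OF a(7) j] a F_P by simp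
      have "Hd (Idm (Dom (pr (cmp s j) (cmp y' j)))) (rx (pr (cmp y j) (cmp y' j)) (delta T Y))"
      proof (rule Hd_ex_p2_elim[OF h2[unfolded F_def]])
        show "Cod (pr (cmp s j) (cmp y' j)) = XY" "\<Theta> \<in> PP (prd A XY)"
          "rx (pr (cmp y j) (cmp y' j)) (delta T Y) \<in> PP (Dom (pr (cmp s j) (cmp y' j)))"
          using a Th_P j unfolding XY_def by simp_all
        fix a2 j2 assume aj2: "Cod a2 = A" "Cod j2 = Dom (pr (cmp s j) (cmp y' j))" "Dom a2 = Dom j2"
          and h3: "Hd (pr a2 (cmp (pr (cmp s j) (cmp y' j)) j2)) \<Theta>"
        have j2: "Cod j2 = Dom j" using aj2 a j by simp
        have j2a: "Cod j2 = Dom a1" using j2 aj(3) by simp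
        have jj: "Cod (cmp j j2) = Dom s" "Dom (cmp j j2) = Dom j2" using j j2 by simp_all
        have c1: "Cod (cmp s (cmp j j2)) = X" using jj a(1) by simp
        have c2: "Cod (cmp y' (cmp j j2)) = Y" using jj a(3,5) by simp
        have d1: "Dom a2 = Dom (cmp s (cmp j j2))" using jj aj2(3) by simp
        have d2: "Dom (cmp s (cmp j j2)) = Dom (cmp y' (cmp j j2))" using jj a(5) by simp
        have eqp: "cmp (pr (cmp s j) (cmp y' j)) j2 = pr (cmp s (cmp j j2)) (cmp y' (cmp j j2))"
          using j j2 a(5) by simp
        have e2: "cmp q a2 = cmp s (cmp j j2)" "cmp f a2 = cmp y' (cmp j j2)"
          using h3[unfolded eqp] Hd_Th[OF aj2(1) c1 c2 d1 d2] by simp_all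
        have "cmp q (cmp a1 j2) = cmp s (cmp j j2)" using cmp_eq_cong[OF e1(1) j2a] aj a j by simp
        then have "cmp q (cmp a1 j2) = cmp q a2" using e2 by simp
        then have "cmp f (cmp a1 j2) = cmp f a2" using f_resp[of "cmp a1 j2" a2] aj aj2 j j2 by simp
        moreover have "cmp f (cmp a1 j2) = cmp y (cmp j j2)" using cmp_eq_cong[OF e1(2) j2a] aj a j f fY by simp
        ultimately have "cmp y (cmp j j2) = cmp y' (cmp j j2)" using e2 by simp
        then have "Hd (pr (cmp y (cmp j j2)) (cmp y' (cmp j j2))) (delta T Y)" using a j j2 Hd_delta by simp
        then show "Hd j2 (rx (pr (cmp y j) (cmp y' j)) (delta T Y))" using a j j2 by (subst Hd_rx) simp_all
      qed
      then have "Hd (pr (cmp y j) (cmp y' j)) (delta T Y)"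
        using Hd_rx[of "Idm (Dom j)" "pr (cmp y j) (cmp y' j)" "delta T Y"] a j by simp
      then show "Hd j (rx (pr y y') (delta T Y))" using a j by (subst Hd_rx) simp_all
    qed
    then have "Hd (pr y y') (delta T Y)" using Hd_rx[of "Idm (Dom s)" "pr y y'" "delta T Y"] a by simp
    then show ?thesis using a Hd_delta by simp
  qed
  have C1: "Le X (Top X) (ex (p1 X Y) F)"
  proof -
    have "Hd (Idm (Dom (Idm X))) (ex (p1 X Y) F)"
    proof (rule surj)
      show "Cod (Idm X) = Dom c" "ex (p1 X Y) F \<in> PP (Dom (Idm X))" using F_P X_def by simp_all
      fix j a assume ja: "Cod j = Dom (Idm X)" "Cod a = A" "Dom a = Dom j" "cmp (Idm X) j = cmp q a"
      have jq: "cmp q a = j" using ja by simp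
      show "Hd j (ex (p1 X Y) F)"
      proof (rule Hd_ex_intro[where w="pr j (cmp f a)"])
        show "cmp (p1 X Y) (pr j (cmp f a)) = j" "Cod (pr j (cmp f a)) = Dom (p1 X Y)" "F \<in> PP (Dom (p1 X Y))"
          using ja f fY F_P by simp_all
        have jc: "Cod j = X" using ja(1) by simp
        have fa: "Cod (cmp f a) = Y" "Dom j = Dom (cmp f a)" using ja(2,3) f fY by simp_all
        show "Hd (pr j (cmp f a)) F" by (rule F_intro[OF ja(2) jc fa(1) ja(3) fa(2) jq refl])
      qed
    qed
    then show ?thesis unfolding Hd_def using F_P by simp
  qed
  have C2: "Le (prd3 T X Y Y)
       (Meet (prd3 T X Y Y) (rx (pr (q1 T X Y Y) (q2 T X Y Y)) F) (rx (pr (q1 T X Y Y) (q3 T X Y Y)) F))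
       (rx (pr (q2 T X Y Y) (q3 T X Y Y)) (delta T Y))"
  proof (rule le_elem)
    show "Meet (prd3 T X Y Y) (rx (pr (q1 T X Y Y) (q2 T X Y Y)) F) (rx (pr (q1 T X Y Y) (q3 T X Y Y)) F) \<in> PP (prd3 T X Y Y)"
      "rx (pr (q2 T X Y Y) (q3 T X Y Y)) (delta T Y) \<in> PP (prd3 T X Y Y)"
      using F_P by (simp_all add: q1_def q2_def q3_def prd3_def)
    fix k assume k: "Cod k = prd3 T X Y Y"
      and hk: "Hd k (Meet (prd3 T X Y Y) (rx (pr (q1 T X Y Y) (q2 T X Y Y)) F) (rx (pr (q1 T X Y Y) (q3 T X Y Y)) F))"
    define s where "s = cmp (p1 X Y) (cmp (p1 (prd X Y) Y) k)"
    define y where "y = cmp (p2 X Y) (cmp (p1 (prd X Y) Y) k)"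
    define y' where "y' = cmp (p2 (prd X Y) Y) k"
    have sy: "Cod s = X" "Cod y = Y" "Cod y' = Y" "Dom s = Dom y" "Dom s = Dom y'"
      using k unfolding s_def y_def y'_def prd3_def by simp_all
    have "Hd k (rx (pr (q1 T X Y Y) (q2 T X Y Y)) F) \<and> Hd k (rx (pr (q1 T X Y Y) (q3 T X Y Y)) F)"
      using hk k F_P by (subst (asm) Hd_Meet) (simp_all add: q1_def q2_def q3_def prd3_def)
    then have "Hd (pr s y) F \<and> Hd (pr s y') F"
      using k F_P unfolding s_def y_def y'_def by (simp add: Hd_rx q1_def q2_def q3_def prd3_def)
    then have "y = y'" using F_sv sy by blast
    then have "Hd (pr y y') (delta T Y)" using sy Hd_delta by simp
    then show "Hd k (rx (pr (q2 T X Y Y) (q3 T X Y Y)) (delta T Y))"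
      using k unfolding y_def y'_def by (simp add: Hd_rx q1_def q2_def q3_def prd3_def)
  qed
  obtain h where h: "hom T h X Y" "F = rx (cross T h (Idm Y)) (delta T Y)"
    using cc F_P C1 C2 unfolding cauchy_complete_def by blast
  have hd: "Dom h = X" "Cod h = Y" using h unfolding hom_def by auto
  have "Hd (pr q f) F" using F_intro[of "Idm A" q f] f fY qX by simp
  then have "Hd (pr q f) (rx (cross T h (Idm Y)) (delta T Y))" using h(2) by simp
  then have "Hd (pr (cmp h q) f) (delta T Y)"
    using Hd_rx[of "pr q f" "cross T h (Idm Y)" "delta T Y"] hd f fY qX by (simp add: cross_eq)
  then have "cmp h q = f" using hd f fY qX Hd_delta by simp
  then show ?thesis using h(1) unfolding X_def Y_def by blast
qed


lemma qs_main: "\<exists>q'. effective_quotient T A \<rho> q' \<and> Cod q' = Dom c"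
proof (intro exI conjI)
  show "Cod q = Dom c" by simp
  show "effective_quotient T A \<rho> q"
    unfolding effective_quotient_def
  proof (intro conjI allI impI)
    show "Dom q = A" by simp
    show "\<rho> = rx (cross T q q) (delta T (Cod q))" by (rule q_eq)
    fix f assume f: "Dom f = A" "Le (prd A A) \<rho> (rx (cross T f f) (delta T (Cod f)))"
    obtain h where h: "hom T h (Dom c) (Cod f)" "cmp h q = f" using q_exists[OF f] by blast
    show "\<exists>!h. hom T h (Cod q) (Cod f) \<and> cmp h q = f"
    proof (rule ex1I[of _ h])
      show "hom T h (Cod q) (Cod f) \<and> cmp h q = f" using h by simp
      fix h' assume h': "hom T h' (Cod q) (Cod f) \<and> cmp h' q = f"
      show "h' = h" using h h' q_epi[of h' "Cod f" h] unfolding hom_def by simp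
    qed
  qed
qed

end

theorem mainTheorem9:
  fixes T :: "('o, 'm, 'p) tripos_data"
  assumes "is_tripos T"
    and "extensional T"
    and "cauchy_complete T"
    and "has_full_comprehensions T"
    and "has_strong_power_objects T"
  shows "has_effective_quotients T \<and>
    (\<forall>A PA m \<rho> c. strong_power T A PA m \<longrightarrow> equiv_rel T A \<rho> \<longrightarrow>
        full_comprehension T PA (class_formula T A PA m \<rho>) c \<longrightarrow>
        (\<exists>q. effective_quotient T A \<rho> q \<and> t_cod T q = t_dom T c))"
proof -
  interpret trip T using assms(1-4) by unfold_locales
  have P2: "\<forall>A PA m \<rho> c. strong_power T A PA m \<longrightarrow> equiv_rel T A \<rho> \<longrightarrow>
        full_comprehension T PA (class_formula T A PA m \<rho>) c \<longrightarrow>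
        (\<exists>q. effective_quotient T A \<rho> q \<and> t_cod T q = t_dom T c)"
  proof (intro allI impI)
    fix A PA m \<rho> c
    assume a: "strong_power T A PA m" "equiv_rel T A \<rho>" "full_comprehension T PA (class_formula T A PA m \<rho>) c"
    interpret qs T A PA m \<rho> c using a by unfold_locales
    show "\<exists>q. effective_quotient T A \<rho> q \<and> t_cod T q = t_dom T c" by (rule qs_main)
  qed
  have P1: "has_effective_quotients T"
    unfolding has_effective_quotients_def
  proof (intro allI impI)
    fix A \<rho> assume r: "equiv_rel T A \<rho>"
    obtain PA m where s: "strong_power T A PA m" using assms(5) unfolding has_strong_power_objects_def by blast
    interpret qs0 T A PA m \<rho> using s r by unfold_locales
    obtain c where "full_comprehension T PA (class_formula T A PA m \<rho>) c"
      using fc sig_P unfolding has_full_comprehensions_def by blast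
    then show "\<exists>q. effective_quotient T A \<rho> q" using P2 s r by blast
  qed
  show ?thesis using P1 P2 by blast
qed

end
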